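(* Assume the AGD setting below with controlled step-size parameters (conditions (A1)–(A4) with constants $\alpha,\epsilon_F,\epsilon_B$), and let $c_1,c_2>0$. Suppose there is an update to $p_j$ at time $t$, and let $\Phi^-$ and $\Phi^+$ be the values of the potential $\Phi$ just before and just after this update. Let the updates in $(\tau_j,t)$ be to coordinates $k_1,\dots,k_m$ at times $\beta_1<\dots<\beta_m$. Then $$\Phi^--\Phi^+\ge\Big(1-\frac1\alpha-2\epsilon_B-c_1(1+4\epsilon_B)-2\epsilon_F\Big)\frac{\gamma_j^t(\Delta p_j)^2}{\Delta t_j}+\big(1-c_2-c_1(2+8\epsilon_B)\big)\sum_{i=1}^m\xi_j^{\beta_i}H_{k_ij}^{[\beta_i,t]}(p_j^t)\frac{(\Delta p_{k_i})^2}{\Delta t_{k_i}}.$$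
   Context: Let $\phi:\mathbb{R}^n\to\mathbb{R}$ be a twice continuously differentiable convex function whose minimum value is $0$. Asynchronous gradient descent (AGD) runs in continuous time $t\ge0$ from $p^0$; each coordinate $p_j$ is changed only at discrete update times, no two updates occur simultaneously. For a quantity changed at time $t$, superscript $t$ or $t-$ denotes its value just before and $t+$ just after; $p^t$ is the current point just before any update at time $t$. For an update to $p_j$ at time $t$, $\tau_j$ is the time of the previous update to $p_j$ ($0$ if none), $\Delta t_j=t-\tau_j\le1$ always. $P_j^{[t_1,t_2]}(s)$ is the box of points $p'$ with $p'_j=s$ and, for $k\ne j$, $p'_k$ ranging over the closed interval spanned by $\{p_k^{t'}:t'\in[t_1,t_2]\}$. Update rule: $p_j^{t+}=p_j^t-\frac{\tilde g_j(t)}{\gamma_j^t}\Delta t_j$, $\tilde g_j(t)=\nabla_j\phi(\tilde p^{j,t})$ for some $\tilde p^{j,t}\in P_j^{[\tau_j,t]}(p_j^t)$, $\gamma_j^t>0$; $\Delta p_j=p_j^{t+}-p_j^t$; $g_j(t)=\nabla_j\phi(p^t)$. $H_{k\ell}(S)=\sup_{p'\in S}|\partial^2\phi/\partial p_k\partial p_\ell(p')|$, $H_{k\ell}^{[t_1,t_2]}(s)=H_{k\ell}(P_\ell^{[t_1,t_2]}(s))$. Controlled: constants $\alpha\ge2$, $\epsilon_F,\epsilon_B>0$, $\frac1\alpha+2\epsilon_B+2\epsilon_F<1$, and for each update of $p_j$ at time $t$ positive numbers $\{\xi_k^t\}_{k\ne j}$, with: (A1) for every $p'$ with $p'_k=p_k^t$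 ($k\ne j$) and $p'_j$ between $p_j^t$ and $p_j^{t+}$, $\phi(p')-\phi(p^t)-\nabla_j\phi(p^t)(p'_j-p_j^t)\le\frac{\gamma_j^t}{\alpha}(p'_j-p_j^t)^2$; (A2) $\gamma_j^t\le\bar\gamma_j<\infty$ for all update times of $p_j$; (A3) $\sum_{k\ne j}\xi_k^tH_{jk}^{[t,\sigma_k]}(p_k^t)\le\epsilon_F\gamma_j^t$, $\sigma_k>t$ the next update time of $p_k$; (A4) if the updates in $(\tau_j,t)$ are to $k_1,\dots,k_m$ at times $\beta_1<\dots<\beta_m$ and $\xi_j^{\beta_i}$ is the number assigned to coordinate $j$ at the update at time $\beta_i$, then $\sum_{k\ne j}(\max_{i:k_i=k}1/\xi_j^{\beta_i})H_{kj}^{[\tau_j,t]}(p_j^t)\le\epsilon_B\gamma_j^t$ (empty max read as $0$). Potential: at any time $t$ (with, for each $j$, $\tau_j$ the time of the most recent update to $p_j$ so far and $\sigma_j$ the time of the next update to $p_j$ after $\tau_j$), $$\Phi=\phi(p^t)-c_1\sum_j\int_{\tau_j}^t\frac{(g_j(t'))^2}{\bar\gamma_j}dt'+\sum_j\sum_i\xi_j^{\beta_i}H_{k_ij}^{[\beta_i,\sigma_j]}(p_j^{\tau_j+})\frac{(\Delta p_{k_i})^2}{\Delta t_{k_i}}\big[2-c_2(t-\beta_i)\big],$$ where for each $j$ the index $i$ runs over all updates, at times $\beta_i\in(\tau_j,t]$, to coordinates $k_i\ne j$, and $\Delta p_{k_i},\Delta t_{k_i}$ are the change and elapsed time of that update.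 *)

theory Defs
  imports "HOL-Analysis.Analysis"
begin

text \<open>AGD process: update number k (k = 0,1,2,...) happens at time T k to coordinate J k;
  p k is the point after the first k updates (p 0 is the starting point), so p k is the
  point just before update k and p (Suc k) the point just after it.\<close>

definition pt :: "(nat \<Rightarrow> real) \<Rightarrow> (nat \<Rightarrow> real^'n) \<Rightarrow> real \<Rightarrow> real^'n" where
  "pt T p s = p (card {k. T k < s})"

definition last_upd :: "(nat \<Rightarrow> real) \<Rightarrow> (nat \<Rightarrow> 'n) \<Rightarrow> nat \<Rightarrow> 'n \<Rightarrow> real" where
  "last_upd T J c j = (if \<exists>m<c. J m = j then T (GREATEST m. m < c \<and> J m = j) else 0)"

definition next_upd :: "(nat \<Rightarrow> real) \<Rightarrow> (nat \<Rightarrow> 'n) \<Rightarrow> 'n \<Rightarrow> real \<Rightarrow> real" where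
  "next_upd T J j s = T (LEAST m. s < T m \<and> J m = j)"

definition dt :: "(nat \<Rightarrow> real) \<Rightarrow> (nat \<Rightarrow> 'n) \<Rightarrow> nat \<Rightarrow> real" where
  "dt T J k = T k - last_upd T J k (J k)"

definition dp :: "(nat \<Rightarrow> real^'n) \<Rightarrow> (nat \<Rightarrow> 'n) \<Rightarrow> nat \<Rightarrow> real" where
  "dp p J k = p (Suc k) $ J k - p k $ J k"

definition agd_box :: "(nat \<Rightarrow> real) \<Rightarrow> (nat \<Rightarrow> real^'n) \<Rightarrow> 'n \<Rightarrow> real \<Rightarrow> real \<Rightarrow> real \<Rightarrow> (real^'n) set" where
  "agd_box T p j t1 t2 s = {x. x $ j = s \<and>
     (\<forall>i. i \<noteq> j \<longrightarrow> x $ i \<in> closure (convex hull ((\<lambda>t'. pt T p t' $ i) ` {t1..t2})))}"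

text \<open>H_{kl}(S), with Hs x the Hessian of phi at x.\<close>
definition Hsup :: "(real^'n \<Rightarrow> real^'n^'n) \<Rightarrow> 'n \<Rightarrow> 'n \<Rightarrow> (real^'n) set \<Rightarrow> real" where
  "Hsup Hs k l S = Sup ((\<lambda>x. \<bar>Hs x $ k $ l\<bar>) ` S)"

definition Hbox :: "(real^'n \<Rightarrow> real^'n^'n) \<Rightarrow> (nat \<Rightarrow> real) \<Rightarrow> (nat \<Rightarrow> real^'n)
    \<Rightarrow> 'n \<Rightarrow> 'n \<Rightarrow> real \<Rightarrow> real \<Rightarrow> real \<Rightarrow> real" where
  "Hbox Hs T p k l t1 t2 s = Hsup Hs k l (agd_box T p l t1 t2 s)"

text \<open>Potential at time s in the state where the first c updates have been performed.\<close>
definition Phi :: "(real^'n::finite \<Rightarrow> real) \<Rightarrow> (real^'n \<Rightarrow> real^'n) \<Rightarrow> (real^'n \<Rightarrow> real^'n^'n)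
    \<Rightarrow> (nat \<Rightarrow> real) \<Rightarrow> (nat \<Rightarrow> 'n) \<Rightarrow> (nat \<Rightarrow> real^'n) \<Rightarrow> ('n \<Rightarrow> real)
    \<Rightarrow> (nat \<Rightarrow> 'n \<Rightarrow> real) \<Rightarrow> real \<Rightarrow> real \<Rightarrow> nat \<Rightarrow> real \<Rightarrow> real" where
  "Phi \<phi> G Hs T J p \<gamma>bar \<xi> c1 c2 c s =
     \<phi> (p c)
     - c1 * (\<Sum>j\<in>UNIV. integral {last_upd T J c j .. s} (\<lambda>t'. (G (pt T p t') $ j)\<^sup>2 / \<gamma>bar j))
     + (\<Sum>j\<in>UNIV. \<Sum>m\<in>{m. m < c \<and> last_upd T J c j < T m}.
          \<xi> m j * Hbox Hs T p (J m) j (T m) (next_upd T J j (last_upd T J c j)) (p c $ j)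
            * (dp p J m)\<^sup>2 / dt T J m * (2 - c2 * (s - T m)))"

end

theory Submission
  imports Defs
begin


lemma line_deriv_scalar:
  fixes f :: "real^'n::finite \<Rightarrow> real" and D :: "real^'n \<Rightarrow> real^'n"
  assumes "\<forall>x. (f has_derivative (\<lambda>h. D x \<bullet> h)) (at x)"
  shows "((\<lambda>s. f (x + s *\<^sub>R v)) has_real_derivative (D (x + s *\<^sub>R v) \<bullet> v)) (at s)"
proof -
  have 1: "((\<lambda>s. x + s *\<^sub>R v) has_derivative (\<lambda>h. h *\<^sub>R v)) (at s)"
    by (auto intro!: derivative_eq_intros)
  have "((f \<circ> (\<lambda>s. x + s *\<^sub>R v)) has_derivative ((\<lambda>h. D (x + s *\<^sub>R v) \<bullet> h) \<circ> (\<lambda>h. h *\<^sub>R v))) (at s)"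
    using diff_chain_at[OF 1 assms[rule_format, of "x + s *\<^sub>R v"]] .
  then show ?thesis
    unfolding has_field_derivative_def o_def
    by (rule has_derivative_eq_rhs) (auto simp: fun_eq_iff inner_scaleR_right)
qed

lemma line_deriv_comp:
  fixes F :: "real^'n::finite \<Rightarrow> real^'n" and H :: "real^'n \<Rightarrow> real^'n^'n"
  assumes "\<forall>x. (F has_derivative (\<lambda>h. H x *v h)) (at x)"
  shows "((\<lambda>s. F (x + s *\<^sub>R v) $ i) has_real_derivative ((H (x + s *\<^sub>R v) *v v) $ i)) (at s)"
proof -
  have 1: "((\<lambda>s. x + s *\<^sub>R v) has_derivative (\<lambda>h. h *\<^sub>R v)) (at s)"
    by (auto intro!: derivative_eq_intros)
  have 2: "((\<lambda>y. F y $ i) has_derivative (\<lambda>h. (H y *v h) $ i)) (at y)" for y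
    using bounded_linear.has_derivative[OF bounded_linear_vec_nth assms[rule_format, of y]] .
  have "(((\<lambda>y. F y $ i) \<circ> (\<lambda>s. x + s *\<^sub>R v)) has_derivative ((\<lambda>h. (H (x + s *\<^sub>R v) *v h) $ i) \<circ> (\<lambda>h. h *\<^sub>R v))) (at s)"
    using diff_chain_at[OF 1 2] .
  then show ?thesis
    unfolding has_field_derivative_def o_def
    by (rule has_derivative_eq_rhs) (auto simp: fun_eq_iff matrix_vector_mult_def sum_distrib_left mult_ac)
qed

lemma mv_axis: "((A::real^'n::finite^'n) *v (c *\<^sub>R axis k 1)) $ j = c * A $ j $ k"
  by (simp add: matrix_vector_mult_def axis_def if_distrib cong: if_cong)


lemma mv_axis1: "((A::real^'n::finite^'n) *v axis k 1) $ j = A $ j $ k"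
  using mv_axis[of A 1 k j] by simp

lemma inner_axis1: "(y::real^'n::finite) \<bullet> axis a 1 = y $ a"
  by (simp add: inner_axis)

lemma hess_Delta:
  fixes \<phi> :: "real^'n::finite \<Rightarrow> real" and G :: "real^'n \<Rightarrow> real^'n" and Hs :: "real^'n \<Rightarrow> real^'n^'n"
  assumes grad: "\<forall>x. (\<phi> has_derivative (\<lambda>h. G x \<bullet> h)) (at x)"
    and hess: "\<forall>x. (G has_derivative (\<lambda>h. Hs x *v h)) (at x)"
    and h: "0 < h"
  shows "\<exists>y. norm (y - x) \<le> 2 * h \<and>
     \<phi> (x + h *\<^sub>R axis b 1 + h *\<^sub>R axis a 1) - \<phi> (x + h *\<^sub>R axis a 1) - \<phi> (x + h *\<^sub>R axis b 1) + \<phi> x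
      = h * h * Hs y $ a $ b"
proof -
  define F where "F s = \<phi> ((x + h *\<^sub>R axis b 1) + s *\<^sub>R axis a 1) - \<phi> (x + s *\<^sub>R axis a 1)" for s
  have dF: "(F has_real_derivative (G ((x + h *\<^sub>R axis b 1) + s *\<^sub>R axis a 1) $ a - G (x + s *\<^sub>R axis a 1) $ a)) (at s)" for s
    unfolding F_def
    using DERIV_diff[OF line_deriv_scalar[OF grad, of "x + h *\<^sub>R axis b 1" "axis a 1" s]
                       line_deriv_scalar[OF grad, of x "axis a 1" s]]
    by (simp add: inner_axis1)
  obtain \<sigma> where \<sigma>: "0 < \<sigma>" "\<sigma> < h" "F h - F 0 = (h - 0) * (G ((x + h *\<^sub>R axis b 1) + \<sigma> *\<^sub>R axis a 1) $ a - G (x + \<sigma> *\<^sub>R axis a 1) $ a)"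
    by (rule exE[OF MVT2[OF h dF]]) auto
  define g where "g v = G ((x + \<sigma> *\<^sub>R axis a 1) + v *\<^sub>R axis b 1) $ a" for v
  have dg: "(g has_real_derivative (Hs ((x + \<sigma> *\<^sub>R axis a 1) + v *\<^sub>R axis b 1) $ a $ b)) (at v)" for v
    unfolding g_def using line_deriv_comp[OF hess, of "x + \<sigma> *\<^sub>R axis a 1" "axis b 1" a v]
    by (simp add: mv_axis1)
  obtain \<nu> where \<nu>: "0 < \<nu>" "\<nu> < h" "g h - g 0 = (h - 0) * Hs ((x + \<sigma> *\<^sub>R axis a 1) + \<nu> *\<^sub>R axis b 1) $ a $ b"
    by (rule exE[OF MVT2[OF h dg]]) auto
  define y where "y = (x + \<sigma> *\<^sub>R axis a 1) + \<nu> *\<^sub>R axis b 1"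
  have "norm (y - x) \<le> norm (\<sigma> *\<^sub>R (axis a 1 :: real^'n)) + norm (\<nu> *\<^sub>R (axis b 1 :: real^'n))"
    unfolding y_def using norm_triangle_ineq[of "\<sigma> *\<^sub>R (axis a 1 :: real^'n)" "\<nu> *\<^sub>R (axis b 1 :: real^'n)"] by simp
  also have "\<dots> \<le> 2 * h" using \<sigma> \<nu> by simp
  finally have ny: "norm (y - x) \<le> 2 * h" .
  have e1: "g h - g 0 = G ((x + h *\<^sub>R axis b 1) + \<sigma> *\<^sub>R axis a 1) $ a - G (x + \<sigma> *\<^sub>R axis a 1) $ a"
    unfolding g_def by (simp add: add_ac)
  have "\<phi> (x + h *\<^sub>R axis b 1 + h *\<^sub>R axis a 1) - \<phi> (x + h *\<^sub>R axis a 1) - \<phi> (x + h *\<^sub>R axis b 1) + \<phi> x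
      = F h - F 0" unfolding F_def by (simp add: add_ac)
  also have "\<dots> = h * h * Hs y $ a $ b" using \<sigma>(3) \<nu>(3) e1 unfolding y_def by simp
  finally show ?thesis using ny by blast
qed

lemma abs_aux: "\<bar>u - p\<bar> < \<bar>p - r\<bar> / 2 \<Longrightarrow> \<bar>(u'::real) - r\<bar> < \<bar>p - r\<bar> / 2 \<Longrightarrow> u = u' \<Longrightarrow> False"
  by (cases "u \<ge> p"; cases "u \<ge> r"; cases "p \<ge> r") auto

lemma hess_sym:
  fixes \<phi> :: "real^'n::finite \<Rightarrow> real" and G :: "real^'n \<Rightarrow> real^'n" and Hs :: "real^'n \<Rightarrow> real^'n^'n"
  assumes grad: "\<forall>x. (\<phi> has_derivative (\<lambda>h. G x \<bullet> h)) (at x)"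
    and hess: "\<forall>x. (G has_derivative (\<lambda>h. Hs x *v h)) (at x)"
    and cont: "continuous_on UNIV Hs"
  shows "Hs x $ a $ b = Hs x $ b $ a"
proof (rule ccontr)
  assume ne: "Hs x $ a $ b \<noteq> Hs x $ b $ a"
  define e where "e = \<bar>Hs x $ a $ b - Hs x $ b $ a\<bar> / 2"
  have e: "e > 0" using ne unfolding e_def by simp
  obtain d where d: "d > 0" "\<And>y. dist y x < d \<Longrightarrow> dist (Hs y) (Hs x) < e"
    using cont e unfolding continuous_on_iff by (metis UNIV_I)
  have comp: "\<bar>Hs y $ i $ k - Hs x $ i $ k\<bar> < e" if "dist y x < d" for y i k
  proof -
    have "\<bar>Hs y $ i $ k - Hs x $ i $ k\<bar> = \<bar>(Hs y - Hs x) $ i $ k\<bar>" by simp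
    also have "\<dots> \<le> norm ((Hs y - Hs x) $ i)" by (rule component_le_norm_cart)
    also have "\<dots> \<le> norm (Hs y - Hs x)" by (rule Finite_Cartesian_Product.norm_nth_le)
    also have "\<dots> < e" using d(2)[OF that] by (simp add: dist_norm)
    finally show ?thesis .
  qed
  define h where "h = d / 4"
  have h: "h > 0" using d unfolding h_def by simp
  obtain y1 where y1: "norm (y1 - x) \<le> 2 * h"
     "\<phi> (x + h *\<^sub>R axis b 1 + h *\<^sub>R axis a 1) - \<phi> (x + h *\<^sub>R axis a 1) - \<phi> (x + h *\<^sub>R axis b 1) + \<phi> x
      = h * h * Hs y1 $ a $ b"
    using hess_Delta[OF grad hess h, of x b a] by blast
  obtain y2 where y2: "norm (y2 - x) \<le> 2 * h"
     "\<phi> (x + h *\<^sub>R axis a 1 + h *\<^sub>R axis b 1) - \<phi> (x + h *\<^sub>R axis b 1) - \<phi> (x + h *\<^sub>R axis a 1) + \<phi> x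
      = h * h * Hs y2 $ b $ a"
    using hess_Delta[OF grad hess h, of x a b] by blast
  have "h * h * Hs y1 $ a $ b = h * h * Hs y2 $ b $ a"
    using y1(2) y2(2) by (simp add: algebra_simps)
  hence eq: "Hs y1 $ a $ b = Hs y2 $ b $ a" using h by simp
  have "dist y1 x < d" "dist y2 x < d" using y1(1) y2(1) h d unfolding h_def dist_norm by auto
  hence c1: "\<bar>Hs y1 $ a $ b - Hs x $ a $ b\<bar> < e" and c2: "\<bar>Hs y2 $ b $ a - Hs x $ b $ a\<bar> < e"
    using comp by auto
  show False using abs_aux[OF c1[unfolded e_def] c2[unfolded e_def] eq] .
qed


lemma set_lt_T: "strict_mono (T::nat\<Rightarrow>real) \<Longrightarrow> {k. T k < T r} = {..<r}"
  by (auto simp: strict_mono_less)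

lemma pt_T: "strict_mono (T::nat\<Rightarrow>real) \<Longrightarrow> pt T p (T r) = p r"
  unfolding pt_def by (simp add: set_lt_T)

lemma card_le_n: assumes "strict_mono (T::nat\<Rightarrow>real)" "t' \<le> T n"
  shows "card {k. T k < t'} \<le> n"
proof -
  have "{k. T k < t'} \<subseteq> {..<n}" using assms by (auto simp: strict_mono_less[symmetric])
  then show ?thesis using card_mono[OF finite_lessThan, of _ n] by simp
qed

lemma card_ge: assumes "strict_mono (T::nat\<Rightarrow>real)" "T r < t'" "t' \<le> T n"
  shows "Suc r \<le> card {k. T k < t'}"
proof -
  have fin: "finite {k. T k < t'}"
    by (rule finite_subset[of _ "{..<n}"]) (use assms in \<open>auto simp: strict_mono_less[symmetric]\<close>)
  have "{..r} \<subseteq> {k. T k < t'}" using assms by (auto dest: strict_mono_mono[THEN monoD] intro: le_less_trans)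
  then have "card {..r} \<le> card {k. T k < t'}" by (rule card_mono[OF fin])
  then show ?thesis by simp
qed

lemma card_zero: assumes "strict_mono (T::nat\<Rightarrow>real)" "0 < T 0" "t' \<le> 0"
  shows "card {k. T k < t'} = 0"
proof -
  have "T k \<ge> T 0" for k using assms(1) by (simp add: strict_mono_less_eq)
  then have "\<not> T k < t'" for k using assms(2,3) by (meson not_le order.strict_trans2 order_trans less_le_not_le)
  then have "{k. T k < t'} = {}" by simp
  then show ?thesis by simp
qed

lemma p_const:
  assumes upd_other: "\<forall>k i. i \<noteq> J k \<longrightarrow> p (Suc k) $ i = p k $ i"
    and "\<forall>m. a \<le> m \<longrightarrow> m < b \<longrightarrow> J m \<noteq> i" and "a \<le> b"
  shows "p b $ i = p a $ i"
  using assms(2,3)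
proof (induction b)
  case 0 then show ?case by simp
next
  case (Suc b)
  show ?case
  proof (cases "a = Suc b")
    case False
    then have "a \<le> b" using Suc by simp
    then show ?thesis using Suc upd_other by auto
  qed simp
qed

lemma last_upd_ex:
  assumes "\<exists>m<c. J m = j"
  obtains r where "r < c" "J r = j" "last_upd T J c j = T r" "\<And>m. r < m \<Longrightarrow> m < c \<Longrightarrow> J m \<noteq> j"
proof -
  define r where "r = (GREATEST m. m < c \<and> J m = j)"
  obtain m where m: "m < c" "J m = j" using assms by blast
  have b: "\<forall>y. y < c \<and> J y = j \<longrightarrow> y \<le> c" by simp
  have P: "r < c \<and> J r = j" unfolding r_def by (rule GreatestI_nat[of _ m c]) (use m in auto)
  have G: "y \<le> r" if "y < c" "J y = j" for y unfolding r_def by (rule Greatest_le_nat[of _ y c]) (use that in auto)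
  show ?thesis
    apply (rule that[of r])
    using P apply auto[2]
    using assms apply (simp add: last_upd_def r_def)
    using G not_le by blast
qed

lemma last_upd_none: "\<not> (\<exists>m<c. J m = j) \<Longrightarrow> last_upd T J c j = 0"
  unfolding last_upd_def by auto

lemma last_upd_lt:
  assumes "strict_mono (T::nat\<Rightarrow>real)" "0 < T 0"
  shows "last_upd T J c j < T c"
proof (cases "\<exists>m<c. J m = j")
  case True
  then obtain r where "r < c" "last_upd T J c j = T r" by (rule last_upd_ex)
  then show ?thesis using assms by (simp add: strict_mono_less)
next
  case False
  have "T 0 \<le> T c" using assms by (simp add: strict_mono_less_eq)
  then show ?thesis using False assms by (simp add: last_upd_none)
qed

lemma last_upd_ge:
  assumes "strict_mono (T::nat\<Rightarrow>real)" "m < c" "J m = j"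
  shows "T m \<le> last_upd T J c j"
proof -
  obtain r where r: "r < c" "J r = j" "last_upd T J c j = T r" "\<And>m'. r < m' \<Longrightarrow> m' < c \<Longrightarrow> J m' \<noteq> j"
    using last_upd_ex[of c J j T] assms by blast
  have "m \<le> r" using r(4)[of m] assms by force
  then show ?thesis using r(3) assms(1) by (simp add: strict_mono_less_eq)
qed

lemma last_upd_Suc_same:
  assumes "strict_mono (T::nat\<Rightarrow>real)"
  shows "last_upd T J (Suc q) (J q) = T q"
proof -
  obtain r where r: "r < Suc q" "J r = J q" "last_upd T J (Suc q) (J q) = T r" "\<And>m'. r < m' \<Longrightarrow> m' < Suc q \<Longrightarrow> J m' \<noteq> J q"
    using last_upd_ex[of "Suc q" J "J q" T] by blast
  have "r = q" using r(1) r(4)[of q] by (cases "r < q") auto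
  then show ?thesis using r by simp
qed

lemma last_upd_Suc_other:
  assumes "i \<noteq> J q"
  shows "last_upd T J (Suc q) i = last_upd T J q i"
proof -
  have e: "(\<exists>m<Suc q. J m = i) = (\<exists>m<q. J m = i)" using assms less_Suc_eq by auto
  have g: "(GREATEST m. m < Suc q \<and> J m = i) = (GREATEST m. m < q \<and> J m = i)"
    by (rule arg_cong[where f=Greatest]) (use assms less_Suc_eq in auto)
  show ?thesis unfolding last_upd_def e g ..
qed

lemma next_upd_same:
  assumes "strict_mono (T::nat\<Rightarrow>real)" "0 < T 0"
  shows "next_upd T J (J q) (last_upd T J q (J q)) = T q"
proof -
  have "(LEAST m. last_upd T J q (J q) < T m \<and> J m = J q) = q"
  proof (rule Least_equality)
    show "last_upd T J q (J q) < T q \<and> J q = J q" using last_upd_lt[OF assms] by simp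
    fix y assume y: "last_upd T J q (J q) < T y \<and> J y = J q"
    show "q \<le> y"
    proof (rule ccontr)
      assume "\<not> q \<le> y"
      then have "T y \<le> last_upd T J q (J q)" using last_upd_ge[OF assms(1), of y q J "J q"] y by simp
      then show False using y by simp
    qed
  qed
  then show ?thesis by (simp add: next_upd_def)
qed

lemma next_upd_other:
  assumes "strict_mono (T::nat\<Rightarrow>real)" "0 < T 0" "i \<noteq> J q"
  shows "next_upd T J i (last_upd T J (Suc q) i) = next_upd T J i (T q)"
proof -
  have "(\<lambda>m. last_upd T J (Suc q) i < T m \<and> J m = i) = (\<lambda>m. T q < T m \<and> J m = i)"
  proof (rule ext, rule iffI)
    fix m assume m: "last_upd T J (Suc q) i < T m \<and> J m = i"
    have "\<not> m < Suc q" using last_upd_ge[OF assms(1), of m "Suc q" J i] m by force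
    then show "T q < T m \<and> J m = i" using m assms(1) by (simp add: strict_mono_less)
  next
    fix m assume m: "T q < T m \<and> J m = i"
    have "last_upd T J (Suc q) i < T (Suc q)" by (rule last_upd_lt[OF assms(1,2)])
    moreover have "last_upd T J (Suc q) i \<le> T q"
    proof (cases "\<exists>m<Suc q. J m = i")
      case True
      then obtain r where "r < Suc q" "last_upd T J (Suc q) i = T r" by (rule last_upd_ex)
      then show ?thesis using assms(1) by (simp add: strict_mono_less_eq)
    next
      case False
      have "T 0 \<le> T q" using assms(1) by (simp add: strict_mono_less_eq)
      then show ?thesis using False assms(2) by (simp add: last_upd_none)
    qed
    ultimately show "last_upd T J (Suc q) i < T m \<and> J m = i" using m by simp
  qed
  then show ?thesis by (simp add: next_upd_def)
qed

lemma dt_pos: "strict_mono (T::nat\<Rightarrow>real) \<Longrightarrow> 0 < T 0 \<Longrightarrow> 0 < dt T J m"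
  unfolding dt_def using last_upd_lt by simp

lemma dt_le_gap: "strict_mono (T::nat\<Rightarrow>real) \<Longrightarrow> m' < m \<Longrightarrow> J m' = J m \<Longrightarrow> dt T J m \<le> T m - T m'"
  unfolding dt_def using last_upd_ge[of T m' m J "J m"] by simp

lemma dt_sum_group:
  assumes sm: "strict_mono (T::nat\<Rightarrow>real)" and T0: "0 < T 0" and dt1: "\<forall>k. dt T J k \<le> 1"
  shows "\<forall>A. A \<subseteq> {..<n} \<longrightarrow> A \<noteq> {} \<longrightarrow> (\<forall>m\<in>A. J m = k) \<longrightarrow> (\<Sum>m\<in>A. dt T J m) \<le> 1 + T (Max A) - T (Min A)"
proof (induction n)
  case 0 then show ?case by auto
next
  case (Suc n)
  show ?case
  proof (intro allI impI)
    fix A assume A: "A \<subseteq> {..<Suc n}" "A \<noteq> {}" "\<forall>m\<in>A. J m = k"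
    have finA: "finite A" using A(1) finite_subset by blast
    show "(\<Sum>m\<in>A. dt T J m) \<le> 1 + T (Max A) - T (Min A)"
    proof (cases "n \<in> A")
      case False
      then have "A \<subseteq> {..<n}" using A(1) less_Suc_eq by auto
      then show ?thesis using Suc.IH A(2) A(3) by blast
    next
      case True
      define A' where "A' = A - {n}"
      have A'sub: "A' \<subseteq> {..<n}" using A(1) unfolding A'_def using less_Suc_eq by auto
      have MaxA: "Max A = n" using True A(1) finA by (intro Max_eqI) (auto simp: less_Suc_eq_le)
      have sumA: "(\<Sum>m\<in>A. dt T J m) = dt T J n + (\<Sum>m\<in>A'. dt T J m)"
        unfolding A'_def using True finA by (simp add: sum.remove)
      show ?thesis
      proof (cases "A' = {}")
        case True
        then have "A = {n}" using \<open>n \<in> A\<close> unfolding A'_def by auto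
        then show ?thesis using dt1 by simp
      next
        case False
        have finA': "finite A'" using finA unfolding A'_def by simp
        have "\<forall>m\<in>A'. J m = k" using A(3) unfolding A'_def by blast
        then have IH: "(\<Sum>m\<in>A'. dt T J m) \<le> 1 + T (Max A') - T (Min A')"
          using Suc.IH A'sub False by blast
        have MA': "Max A' \<in> A'" "Max A' < n" using False finA' A'sub by auto
        have "dt T J n \<le> T n - T (Max A')"
          by (rule dt_le_gap[OF sm]) (use MA' A(3) True in \<open>auto simp: A'_def\<close>)
        moreover have "Min A = Min A'"
        proof -
          have "A = insert n A'" using \<open>n \<in> A\<close> unfolding A'_def by auto
          then have "Min A = min n (Min A')" using finA' False by simp
          moreover have "Min A' \<le> Max A'" using finA' False by simp
          ultimately show ?thesis using MA' by simp
        qed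
        ultimately show ?thesis using sumA IH MaxA by simp
      qed
    qed
  qed
qed


lemma conv_hull_real_bound:
  fixes S :: "real set"
  assumes "S \<subseteq> {a..b}"
  shows "closure (convex hull S) \<subseteq> {a..b}"
proof -
  have "convex hull S \<subseteq> {a..b}" by (rule hull_minimal[OF assms]) (simp add: convex_real_interval)
  then show ?thesis by (rule closure_minimal) simp
qed

lemma box_bounded:
  assumes sm: "strict_mono (T::nat\<Rightarrow>real)"
  shows "bounded (agd_box T p j t1 (T n) s)"
proof -
  define B where "B = \<bar>s\<bar> + (\<Sum>i\<in>UNIV. \<Sum>r\<in>{..n}. \<bar>p r $ i\<bar>)"
  have pr: "\<bar>p r $ i\<bar> \<le> B" if "r \<le> n" for r i
  proof -
    have "\<bar>p r $ i\<bar> \<le> (\<Sum>r\<in>{..n}. \<bar>p r $ i\<bar>)"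
      using that by (intro member_le_sum) auto
    also have "\<dots> \<le> (\<Sum>i\<in>UNIV. \<Sum>r\<in>{..n}. \<bar>p r $ i\<bar>)"
      by (intro member_le_sum) (auto intro: sum_nonneg)
    finally show ?thesis unfolding B_def by simp
  qed
  have comp: "\<bar>x $ i\<bar> \<le> B" if x: "x \<in> agd_box T p j t1 (T n) s" for x i
  proof (cases "i = j")
    case True
    then show ?thesis using x unfolding agd_box_def B_def by (auto intro!: add_increasing2 sum_nonneg)
  next
    case False
    have "(\<lambda>t'. pt T p t' $ i) ` {t1..T n} \<subseteq> {-B..B}"
    proof
      fix v assume "v \<in> (\<lambda>t'. pt T p t' $ i) ` {t1..T n}"
      then obtain t' where t': "t' \<in> {t1..T n}" "v = pt T p t' $ i" by blast
      have "card {k. T k < t'} \<le> n" using card_le_n[OF sm] t' by simp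
      then show "v \<in> {-B..B}" using pr[of "card {k. T k < t'}" i] t' unfolding pt_def by auto
    qed
    then have "closure (convex hull ((\<lambda>t'. pt T p t' $ i) ` {t1..T n})) \<subseteq> {-B..B}"
      by (rule conv_hull_real_bound)
    moreover have "x $ i \<in> closure (convex hull ((\<lambda>t'. pt T p t' $ i) ` {t1..T n}))"
      using x False unfolding agd_box_def by auto
    ultimately have "x $ i \<in> {-B..B}" by blast
    then show ?thesis by auto
  qed
  show ?thesis unfolding bounded_iff
  proof (intro exI ballI)
    fix x assume x: "x \<in> agd_box T p j t1 (T n) s"
    have "norm x \<le> (\<Sum>i\<in>UNIV. \<bar>x $ i\<bar>)" by (rule norm_le_l1_cart)
    also have "\<dots> \<le> (\<Sum>i\<in>(UNIV::'a set). B)" by (rule sum_mono) (use comp x in auto)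
    finally show "norm x \<le> CARD('a) * B" by simp
  qed
qed

lemma Hsup_bdd:
  assumes cont: "continuous_on UNIV (Hs::real^'n::finite \<Rightarrow> real^'n^'n)" and bd: "bounded S"
  shows "bdd_above ((\<lambda>x. \<bar>Hs x $ k $ l\<bar>) ` S)"
proof -
  have cpt: "compact (Hs ` closure S)"
    by (rule compact_continuous_image[OF continuous_on_subset[OF cont]]) (use bd compact_closure in auto)
  then obtain C where C: "\<forall>y\<in>Hs ` closure S. norm y \<le> C" using compact_imp_bounded[OF cpt] unfolding bounded_iff by blast
  show ?thesis unfolding bdd_above_def
  proof (intro exI ballI)
    fix v assume "v \<in> (\<lambda>x. \<bar>Hs x $ k $ l\<bar>) ` S"
    then obtain x where x: "x \<in> S" "v = \<bar>Hs x $ k $ l\<bar>" by blast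
    have "\<bar>Hs x $ k $ l\<bar> \<le> norm (Hs x $ k)" by (rule component_le_norm_cart)
    also have "\<dots> \<le> norm (Hs x)" by (rule Finite_Cartesian_Product.norm_nth_le)
    also have "\<dots> \<le> C" using C x closure_subset by blast
    finally show "v \<le> C" using x by simp
  qed
qed

lemma Hsup_ge: "bdd_above ((\<lambda>x. \<bar>Hs x $ k $ l\<bar>) ` S) \<Longrightarrow> x \<in> S \<Longrightarrow> \<bar>Hs x $ k $ l\<bar> \<le> Hsup Hs k l S"
  unfolding Hsup_def by (rule cSUP_upper)

lemma Hsup_nonneg: "bdd_above ((\<lambda>x. \<bar>Hs x $ k $ l\<bar>) ` S) \<Longrightarrow> x \<in> S \<Longrightarrow> 0 \<le> Hsup Hs k l S"
  using Hsup_ge[of Hs k l S x] by linarith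

lemma Hsup_mono: "bdd_above ((\<lambda>x. \<bar>Hs x $ k $ l\<bar>) ` S') \<Longrightarrow> S \<noteq> {} \<Longrightarrow> S \<subseteq> S' \<Longrightarrow> Hsup Hs k l S \<le> Hsup Hs k l S'"
  unfolding Hsup_def by (rule cSup_subset_mono) auto

lemma box_mono: "t1' \<le> t1 \<Longrightarrow> agd_box T p j t1 t2 s \<subseteq> agd_box T p j t1' t2 s"
proof -
  assume a: "t1' \<le> t1"
  have "closure (convex hull ((\<lambda>t'. pt T p t' $ i) ` {t1..t2})) \<subseteq> closure (convex hull ((\<lambda>t'. pt T p t' $ i) ` {t1'..t2}))" for i
    by (intro closure_mono hull_mono image_mono) (use a in auto)
  then show ?thesis unfolding agd_box_def by blast
qed

lemma pt_in_hull: "t' \<in> {t1..t2} \<Longrightarrow> pt T p t' $ i \<in> closure (convex hull ((\<lambda>t'. pt T p t' $ i) ` {t1..t2}))"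
  by (rule subsetD[OF closure_subset], rule hull_inc) simp

lemma box_nonempty: "t1 \<le> t2 \<Longrightarrow> (\<chi> i. if i = j then s else pt T p t2 $ i) \<in> agd_box T p j t1 t2 s"
  unfolding agd_box_def using pt_in_hull[of t2 t1 t2] by auto


lemma mv_coord:
  fixes \<phi> :: "real^'n::finite \<Rightarrow> real" and G :: "real^'n \<Rightarrow> real^'n" and Hs :: "real^'n \<Rightarrow> real^'n^'n"
  assumes grad: "\<forall>x. (\<phi> has_derivative (\<lambda>h. G x \<bullet> h)) (at x)"
    and hess: "\<forall>x. (G has_derivative (\<lambda>h. Hs x *v h)) (at x)"
    and cont: "continuous_on UNIV Hs"
    and diff: "\<forall>i. i \<noteq> k \<longrightarrow> y' $ i = y $ i"
    and bnd: "\<forall>w\<in>closed_segment y y'. \<bar>Hs w $ k $ j\<bar> \<le> H"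
  shows "\<bar>G y' $ j - G y $ j\<bar> \<le> H * \<bar>y' $ k - y $ k\<bar>"
proof -
  define d where "d = y' $ k - y $ k"
  define v where "v = d *\<^sub>R (axis k 1 :: real^'n)"
  have y': "y' = y + v" unfolding v_def d_def vec_eq_iff using diff by (auto simp: axis_def)
  define g where "g u = G (y + u *\<^sub>R v) $ j" for u
  have dg: "(g has_real_derivative (d * Hs (y + u *\<^sub>R v) $ k $ j)) (at u)" for u
  proof -
    have "(g has_real_derivative ((Hs (y + u *\<^sub>R v) *v v) $ j)) (at u)"
      unfolding g_def by (rule line_deriv_comp[OF hess])
    moreover have "(Hs (y + u *\<^sub>R v) *v v) $ j = d * Hs (y + u *\<^sub>R v) $ k $ j"
      unfolding v_def mv_axis using hess_sym[OF grad hess cont] by simp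
    ultimately show ?thesis by simp
  qed
  obtain z where z: "0 < z" "z < 1" "g 1 - g 0 = (1 - 0) * (d * Hs (y + z *\<^sub>R v) $ k $ j)"
    by (rule exE[OF MVT2[OF zero_less_one dg]]) auto
  have "y + z *\<^sub>R v \<in> closed_segment y y'"
    unfolding closed_segment_def y' using z
    by (intro CollectI exI[of _ z]) (auto simp: algebra_simps)
  then have "\<bar>Hs (y + z *\<^sub>R v) $ k $ j\<bar> \<le> H" using bnd by blast
  moreover have "G y' $ j - G y $ j = d * Hs (y + z *\<^sub>R v) $ k $ j"
    using z(3) unfolding g_def y' by simp
  ultimately show ?thesis unfolding d_def[symmetric]
    by (simp add: abs_mult mult.commute) (metis abs_ge_zero mult.commute mult_right_mono)
qed


lemma seg_real_split:
  fixes x a b c :: real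
  assumes "x \<in> closed_segment a c" "x \<notin> closed_segment b c"
  shows "x \<in> closed_segment a b"
  using assms by (auto simp: closed_segment_eq_real_ivl split: if_splits)

lemma seg_real_ex:
  fixes x a b c :: real
  assumes "a \<le> x" "x \<le> b" "a \<le> c" "c \<le> b"
  shows "x \<in> closed_segment a c \<or> x \<in> closed_segment b c"
  using assms by (auto simp: closed_segment_eq_real_ivl)

lemma seg_comp:
  fixes w y y' :: "real^'n::finite"
  assumes "w \<in> closed_segment y y'"
  shows "w $ i \<in> closed_segment (y $ i) (y' $ i)"
  using assms unfolding closed_segment_def by auto

lemma grad_box_bound:
  fixes \<phi> :: "real^'n::finite \<Rightarrow> real" and G :: "real^'n \<Rightarrow> real^'n" and Hs :: "real^'n \<Rightarrow> real^'n^'n"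
    and T :: "nat \<Rightarrow> real" and J :: "nat \<Rightarrow> 'n" and p :: "nat \<Rightarrow> real^'n"
  assumes grad: "\<forall>x. (\<phi> has_derivative (\<lambda>h. G x \<bullet> h)) (at x)"
    and hess: "\<forall>x. (G has_derivative (\<lambda>h. Hs x *v h)) (at x)"
    and cont: "continuous_on UNIV Hs"
    and sm: "strict_mono T"
    and upd_other: "\<forall>k i. i \<noteq> J k \<longrightarrow> p (Suc k) $ i = p k $ i"
    and lo: "lo \<le> q"
    and notj: "\<forall>m. lo \<le> m \<longrightarrow> m < q \<longrightarrow> J m \<noteq> j"
    and img: "\<forall>i. i \<noteq> j \<longrightarrow> (\<lambda>t'. pt T p t' $ i) ` {t1..T q} \<subseteq> (\<lambda>r. p r $ i) ` {lo..q}"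
    and x: "x \<in> agd_box T p j t1 (T q) (p q $ j)"
  shows "\<bar>G x $ j - G (p q) $ j\<bar> \<le> (\<Sum>r\<in>{lo..<q}. Hsup Hs (J r) j (agd_box T p j (T r) (T q) (p q $ j)) * \<bar>dp p J r\<bar>)"
proof -
  define V where "V i = (\<lambda>r. p r $ i) ` {lo..q}" for i
  have finV: "finite (V i)" "V i \<noteq> {}" for i unfolding V_def using lo by auto
  have xj: "x $ j = p q $ j" using x unfolding agd_box_def by simp
  have xrange: "x $ i \<in> {Min (V i) .. Max (V i)}" if "i \<noteq> j" for i
  proof -
    have "x $ i \<in> closure (convex hull ((\<lambda>t'. pt T p t' $ i) ` {t1..T q}))"
      using x that unfolding agd_box_def by auto
    also have "\<dots> \<subseteq> closure (convex hull (V i))"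
      unfolding V_def by (intro closure_mono hull_mono img[rule_format, OF that])
    also have "\<dots> \<subseteq> {Min (V i) .. Max (V i)}"
      by (rule conv_hull_real_bound) (use finV in auto)
    finally show ?thesis .
  qed
  define P where "P i s = (lo \<le> s \<and> s \<le> q \<and> x $ i \<in> closed_segment (p s $ i) (p q $ i))" for i s
  define sidx where "sidx i = (GREATEST s. P i s)" for i
  have Pex: "\<exists>s. P i s" if "i \<noteq> j" for i
  proof -
    have "Min (V i) \<in> V i" by (rule Min_in[OF finV])
    then obtain a where a: "a \<in> {lo..q}" "p a $ i = Min (V i)"
      unfolding V_def image_iff by metis
    have "Max (V i) \<in> V i" by (rule Max_in[OF finV])
    then obtain b where b: "b \<in> {lo..q}" "p b $ i = Max (V i)"
      unfolding V_def image_iff by metis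
    have "p q $ i \<in> V i" unfolding V_def using lo by auto
    then have mm: "Min (V i) \<le> p q $ i" "p q $ i \<le> Max (V i)" using finV by auto
    have "x $ i \<in> closed_segment (p a $ i) (p q $ i) \<or> x $ i \<in> closed_segment (p b $ i) (p q $ i)"
      apply (rule seg_real_ex) using xrange[OF that] mm a(2) b(2) by auto
    then show ?thesis unfolding P_def using a b by auto
  qed
  have Pb: "\<forall>s. P i s \<longrightarrow> s \<le> q" for i unfolding P_def by auto
  have sP: "P i (sidx i)" if ij: "i \<noteq> j" for i
  proof -
    obtain s where "P i s" using Pex[OF ij] by blast
    then show ?thesis unfolding sidx_def by (rule GreatestI_nat) (use Pb in blast)
  qed
  have sge: "s \<le> sidx i" if "P i s" for i s
    unfolding sidx_def by (rule Greatest_le_nat[of "P i" s q]) (use that Pb in auto)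
  have sseg: "x $ i \<in> closed_segment (p (sidx i) $ i) (p (Suc (sidx i)) $ i)" if "i \<noteq> j" "sidx i < q" for i
  proof -
    have "\<not> P i (Suc (sidx i))" using sge[of i "Suc (sidx i)"] by auto
    then have "x $ i \<notin> closed_segment (p (Suc (sidx i)) $ i) (p q $ i)"
      using sP[OF that(1)] that(2) unfolding P_def by auto
    then show ?thesis using sP[OF that(1)] seg_real_split unfolding P_def by blast
  qed
  have sq: "x $ i = p q $ i" if "i \<noteq> j" "sidx i = q" for i
    using sP[OF that(1)] that(2) unfolding P_def by simp
  have slo: "lo \<le> sidx i" "sidx i \<le> q" if "i \<noteq> j" for i using sP[OF that] unfolding P_def by auto
  define z where "z r = (\<chi> i. if i = j then p q $ j else if sidx i < r then p r $ i else x $ i)" for r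
  have zq: "z q = p q" unfolding vec_eq_iff
  proof
    fix i show "z q $ i = p q $ i"
    proof (cases "i = j")
      case False
      show ?thesis
      proof (cases "sidx i < q")
        case False': False
        then have "sidx i = q" using slo(2)[OF False] by simp
        then show ?thesis using sq[OF False] False unfolding z_def by simp
      qed (use False in \<open>simp add: z_def\<close>)
    qed (simp add: z_def)
  qed
  have zlo: "z lo = x" unfolding vec_eq_iff
  proof
    fix i show "z lo $ i = x $ i"
    proof (cases "i = j")
      case False
      then have "\<not> sidx i < lo" using slo(1)[OF False] by simp
      then show ?thesis using False unfolding z_def by simp
    qed (simp add: z_def xj)
  qed
  define C where "C r i = closure (convex hull ((\<lambda>t'. pt T p t' $ i) ` {T r..T q}))" for r i
  have convC: "convex (C r i)" for r i unfolding C_def by simp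
  have pin: "p r' $ i \<in> C r i" if "r \<le> r'" "r' \<le> q" for r r' i
  proof -
    have "T r' \<in> {T r..T q}" using that sm by (simp add: strict_mono_less_eq)
    then show ?thesis unfolding C_def using pt_in_hull[of "T r'" "T r" "T q" T p i] by (simp add: pt_T[OF sm])
  qed
  have xinC: "x $ i \<in> C r i" if "i \<noteq> j" "r \<le> sidx i" for r i
  proof (cases "sidx i = q")
    case True then show ?thesis using sq[OF that(1)] pin[of r q i] that by simp
  next
    case False
    then have lt: "sidx i < q" using slo[OF that(1)] by simp
    have "closed_segment (p (sidx i) $ i) (p (Suc (sidx i)) $ i) \<subseteq> C r i"
      by (rule closed_segment_subset[OF pin pin convC]) (use that lt in auto)
    then show ?thesis using sseg[OF that(1) lt] by blast
  qed
  have step: "\<bar>G (z (Suc r)) $ j - G (z r) $ j\<bar> \<le> Hsup Hs (J r) j (agd_box T p j (T r) (T q) (p q $ j)) * \<bar>dp p J r\<bar>"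
    if r: "lo \<le> r" "r < q" for r
  proof -
    define k where "k = J r"
    have kj: "k \<noteq> j" unfolding k_def using notj r by auto
    define Bx where "Bx = agd_box T p j (T r) (T q) (p q $ j)"
    have bdd: "bdd_above ((\<lambda>x. \<bar>Hs x $ k $ j\<bar>) ` Bx)"
      unfolding Bx_def by (rule Hsup_bdd[OF cont box_bounded[OF sm]])
    have Tle: "T r \<le> T q" using r sm by (simp add: strict_mono_less_eq)
    have "(\<chi> i. if i = j then p q $ j else pt T p (T q) $ i) \<in> Bx"
      unfolding Bx_def by (rule box_nonempty[OF Tle])
    then have hnn: "0 \<le> Hsup Hs k j Bx" by (rule Hsup_nonneg[OF bdd])
    have zdiff: "\<forall>i. i \<noteq> k \<longrightarrow> z (Suc r) $ i = z r $ i"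
    proof (intro allI impI)
      fix i assume ik: "i \<noteq> k"
      show "z (Suc r) $ i = z r $ i"
      proof (cases "i = j")
        case False
        have pe: "p (Suc r) $ i = p r $ i" using upd_other ik unfolding k_def by auto
        consider "sidx i < r" | "sidx i = r" | "r < sidx i" by linarith
        then show ?thesis
        proof cases
          case 2
          then have "x $ i \<in> closed_segment (p r $ i) (p (Suc r) $ i)" using sseg[OF False] r by auto
          then show ?thesis using 2 pe unfolding z_def by simp
        qed (use pe in \<open>auto simp: z_def\<close>)
      qed (simp add: z_def)
    qed
    have zk: "\<bar>z (Suc r) $ k - z r $ k\<bar> \<le> \<bar>dp p J r\<bar>"
    proof -
      have dpk: "dp p J r = p (Suc r) $ k - p r $ k" unfolding dp_def k_def ..
      consider "sidx k < r" | "sidx k = r" | "r < sidx k" by linarith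
      then show ?thesis
      proof cases
        case 1 then show ?thesis using kj dpk unfolding z_def by simp
      next
        case 2
        then have "x $ k \<in> closed_segment (p r $ k) (p (Suc r) $ k)" using sseg[OF kj] r by auto
        then have "\<bar>p (Suc r) $ k - x $ k\<bar> \<le> \<bar>p (Suc r) $ k - p r $ k\<bar>"
          by (auto simp: closed_segment_eq_real_ivl split: if_splits)
        then show ?thesis using 2 kj dpk unfolding z_def by simp
      next
        case 3 then show ?thesis using kj unfolding z_def by simp
      qed
    qed
    have zC: "z r $ i \<in> C r i" "z (Suc r) $ i \<in> C r i" if "i \<noteq> j" for i
    proof -
      show "z r $ i \<in> C r i"
        using pin[of r r i] xinC[OF that, of r] r that unfolding z_def by (auto simp: not_less)
      show "z (Suc r) $ i \<in> C r i"
        using pin[of r "Suc r" i] xinC[OF that, of r] r that unfolding z_def by (auto simp: not_less)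
    qed
    have segbox: "closed_segment (z r) (z (Suc r)) \<subseteq> Bx"
    proof
      fix w assume w: "w \<in> closed_segment (z r) (z (Suc r))"
      have wj: "w $ j = p q $ j" using seg_comp[OF w, of j] unfolding z_def by simp
      have "w $ i \<in> C r i" if "i \<noteq> j" for i
        using seg_comp[OF w, of i] closed_segment_subset[OF zC[OF that] convC] by blast
      then show "w \<in> Bx" unfolding Bx_def agd_box_def C_def using wj by auto
    qed
    have "\<bar>G (z (Suc r)) $ j - G (z r) $ j\<bar> \<le> Hsup Hs k j Bx * \<bar>z (Suc r) $ k - z r $ k\<bar>"
      by (rule mv_coord[OF grad hess cont zdiff]) (use segbox Hsup_ge[OF bdd] in blast)
    also have "\<dots> \<le> Hsup Hs k j Bx * \<bar>dp p J r\<bar>" by (rule mult_left_mono[OF zk hnn])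
    finally show ?thesis unfolding Bx_def k_def .
  qed
  have "G (p q) $ j - G x $ j = (\<Sum>r\<in>{lo..<q}. G (z (Suc r)) $ j - G (z r) $ j)"
    using sum_Suc_diff'[OF lo, of "\<lambda>r. G (z r) $ j"] zq zlo by simp
  then have "\<bar>G x $ j - G (p q) $ j\<bar> = \<bar>\<Sum>r\<in>{lo..<q}. G (z (Suc r)) $ j - G (z r) $ j\<bar>" by linarith
  also have "\<dots> \<le> (\<Sum>r\<in>{lo..<q}. \<bar>G (z (Suc r)) $ j - G (z r) $ j\<bar>)" by (rule sum_abs)
  also have "\<dots> \<le> (\<Sum>r\<in>{lo..<q}. Hsup Hs (J r) j (agd_box T p j (T r) (T q) (p q $ j)) * \<bar>dp p J r\<bar>)"
    by (rule sum_mono) (use step in auto)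
  finally show ?thesis .
qed


lemma integral_bound:
  fixes f :: "real \<Rightarrow> real"
  assumes ab: "a \<le> b" and K: "0 \<le> K" and fb: "\<And>x. a < x \<Longrightarrow> x \<le> b \<Longrightarrow> f x \<le> K"
  shows "integral {a..b} f \<le> (b - a) * K"
proof -
  define g where "g x = (if x = a then K else f x)" for x
  have eq: "integral {a..b} f = integral {a..b} g"
    by (rule integral_spike[of "{a}"]) (auto simp: g_def)
  have gb: "g x \<le> K" if "x \<in> {a..b}" for x using that fb by (auto simp: g_def)
  show ?thesis
  proof (cases "g integrable_on {a..b}")
    case True
    have "integral {a..b} g \<le> integral {a..b} (\<lambda>x. K)"
      by (rule integral_le[OF True integrable_const_ivl gb])
    then show ?thesis using eq ab by (simp add: mult.commute)
  next
    case False
    then show ?thesis using eq ab K by (simp add: not_integrable_integral)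
  qed
qed

lemma amgm:
  fixes u v c :: real
  assumes "0 < c"
  shows "u * v \<le> c * u\<^sup>2 + v\<^sup>2 / (4 * c)"
proof -
  have "0 \<le> (2 * c * u - v)\<^sup>2" by simp
  then have "4 * c * (u * v) \<le> 4 * c * (c * u\<^sup>2 + v\<^sup>2 / (4 * c))"
    using assms by (simp add: power2_eq_square algebra_simps)
  then show ?thesis using assms by simp
qed

lemma cs_sum:
  fixes h dt \<xi> d :: "nat \<Rightarrow> real"
  assumes "\<And>m. m \<in> A \<Longrightarrow> 0 \<le> h m" "\<And>m. m \<in> A \<Longrightarrow> 0 < dt m" "\<And>m. m \<in> A \<Longrightarrow> 0 < \<xi> m"
  shows "(\<Sum>m\<in>A. h m * \<bar>d m\<bar>)\<^sup>2 \<le> (\<Sum>m\<in>A. h m * dt m / \<xi> m) * (\<Sum>m\<in>A. \<xi> m * h m * (d m)\<^sup>2 / dt m)"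
proof -
  define a where "a m = sqrt (h m * dt m / \<xi> m)" for m
  define b where "b m = sqrt (\<xi> m * h m / dt m) * \<bar>d m\<bar>" for m
  have ab: "a m * b m = h m * \<bar>d m\<bar>" if "m \<in> A" for m
  proof -
    have "a m * b m = sqrt (h m * dt m / \<xi> m * (\<xi> m * h m / dt m)) * \<bar>d m\<bar>"
      unfolding a_def b_def real_sqrt_mult by (simp only: mult.assoc)
    also have "h m * dt m / \<xi> m * (\<xi> m * h m / dt m) = (h m)\<^sup>2"
      using assms(2,3)[OF that] by (simp add: field_simps power2_eq_square)
    finally show ?thesis using assms(1)[OF that] by simp
  qed
  have a2: "(a m)\<^sup>2 = h m * dt m / \<xi> m" if "m \<in> A" for m
    unfolding a_def using assms[OF that] by simp
  have b2: "(b m)\<^sup>2 = \<xi> m * h m * (d m)\<^sup>2 / dt m" if "m \<in> A" for m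
    unfolding b_def using assms[OF that] by (simp add: power_mult_distrib)
  have "(\<Sum>m\<in>A. h m * \<bar>d m\<bar>)\<^sup>2 = (\<Sum>m\<in>A. a m * b m)\<^sup>2" using ab by simp
  also have "\<dots> \<le> (\<Sum>m\<in>A. (a m)\<^sup>2) * (\<Sum>m\<in>A. (b m)\<^sup>2)" by (rule Cauchy_Schwarz_ineq_sum)
  also have "\<dots> = (\<Sum>m\<in>A. h m * dt m / \<xi> m) * (\<Sum>m\<in>A. \<xi> m * h m * (d m)\<^sup>2 / dt m)"
    using a2 b2 by simp
  finally show ?thesis .
qed


lemma Phi_diff:
  fixes \<phi> :: "real^'n::finite \<Rightarrow> real" and G :: "real^'n \<Rightarrow> real^'n"
    and Hs :: "real^'n \<Rightarrow> real^'n^'n"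
    and T :: "nat \<Rightarrow> real" and J :: "nat \<Rightarrow> 'n" and p :: "nat \<Rightarrow> real^'n"
  assumes sm: "strict_mono T" and T0: "0 < T 0"
    and upd_other: "\<forall>k i. i \<noteq> J k \<longrightarrow> p (Suc k) $ i = p k $ i"
  shows "Phi \<phi> G Hs T J p \<gamma>bar \<xi> c1 c2 q (T q) - Phi \<phi> G Hs T J p \<gamma>bar \<xi> c1 c2 (Suc q) (T q) =
   \<phi> (p q) - \<phi> (p (Suc q))
   - c1 * integral {last_upd T J q (J q) .. T q} (\<lambda>t'. (G (pt T p t') $ J q)\<^sup>2 / \<gamma>bar (J q))
   + (\<Sum>m\<in>{m. m < q \<and> last_upd T J q (J q) < T m}. \<xi> m (J q) * Hbox Hs T p (J m) (J q) (T m) (T q) (p q $ J q)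
        * (dp p J m)\<^sup>2 / dt T J m * (2 - c2 * (T q - T m)))
   - (\<Sum>i\<in>UNIV - {J q}. \<xi> q i * Hbox Hs T p (J q) i (T q) (next_upd T J i (T q)) (p q $ i)
        * (dp p J q)\<^sup>2 / dt T J q * (2 - c2 * (T q - T q)))"
proof -
  define j where "j = J q"
  define I where "I c i = integral {last_upd T J c i .. T q} (\<lambda>t'. (G (pt T p t') $ i)\<^sup>2 / \<gamma>bar i)" for c i
  define Z where "Z c i = (\<Sum>m\<in>{m. m < c \<and> last_upd T J c i < T m}.
          \<xi> m i * Hbox Hs T p (J m) i (T m) (next_upd T J i (last_upd T J c i)) (p c $ i)
            * (dp p J m)\<^sup>2 / dt T J m * (2 - c2 * (T q - T m)))" for c i
  define W where "W i = \<xi> q i * Hbox Hs T p (J q) i (T q) (next_upd T J i (T q)) (p q $ i)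
        * (dp p J q)\<^sup>2 / dt T J q * (2 - c2 * (T q - T q))" for i
  have Phi_eq: "Phi \<phi> G Hs T J p \<gamma>bar \<xi> c1 c2 c (T q) = \<phi> (p c) - c1 * (\<Sum>i\<in>UNIV. I c i) + (\<Sum>i\<in>UNIV. Z c i)" for c
    unfolding Phi_def I_def Z_def ..
  have Ij: "I (Suc q) j = 0" unfolding I_def j_def last_upd_Suc_same[OF sm] by simp
  have Io: "I (Suc q) i = I q i" if "i \<noteq> j" for i
    unfolding I_def using last_upd_Suc_other[of i J q T] that unfolding j_def by simp
  have Zj: "Z (Suc q) j = 0"
  proof -
    have "{m. m < Suc q \<and> last_upd T J (Suc q) j < T m} = {}"
      unfolding j_def last_upd_Suc_same[OF sm]
      using sm by (auto simp: less_Suc_eq_le dest: strict_mono_mono[THEN monoD] simp del: strict_mono_less_eq)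
    then show ?thesis unfolding Z_def by (simp only: sum.empty)
  qed
  have Zo: "Z (Suc q) i = Z q i + W i" if ij: "i \<noteq> j" for i
  proof -
    have lu: "last_upd T J (Suc q) i = last_upd T J q i" using last_upd_Suc_other[of i J q T] ij unfolding j_def by simp
    have pe: "p (Suc q) $ i = p q $ i" using upd_other ij unfolding j_def by auto
    have lt: "last_upd T J q i < T q" using last_upd_lt[OF sm T0] .
    have set: "{m. m < Suc q \<and> last_upd T J q i < T m} = insert q {m. m < q \<and> last_upd T J q i < T m}"
      using lt less_Suc_eq by auto
    have nu: "next_upd T J i (last_upd T J q i) = next_upd T J i (T q)"
      using next_upd_other[where T=T and J=J and i=i and q=q, OF sm T0 ij[unfolded j_def]] lu by simp
    show ?thesis unfolding Z_def lu pe unfolding set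
      by (subst sum.insert) (auto simp: W_def nu)
  qed
  have Zjq: "Z q j = (\<Sum>m\<in>{m. m < q \<and> last_upd T J q (J q) < T m}. \<xi> m (J q) * Hbox Hs T p (J m) (J q) (T m) (T q) (p q $ J q)
        * (dp p J m)\<^sup>2 / dt T J m * (2 - c2 * (T q - T m)))"
    unfolding Z_def j_def next_upd_same[OF sm T0] ..
  have sI: "(\<Sum>i\<in>UNIV. I q i) - (\<Sum>i\<in>UNIV. I (Suc q) i) = I q j"
  proof -
    have "(\<Sum>i\<in>UNIV. I q i) - (\<Sum>i\<in>UNIV. I (Suc q) i) = (\<Sum>i\<in>UNIV. I q i - I (Suc q) i)"
      by (simp add: sum_subtractf)
    also have "\<dots> = (I q j - I (Suc q) j) + (\<Sum>i\<in>UNIV - {j}. I q i - I (Suc q) i)"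
      by (simp add: sum.remove)
    also have "(\<Sum>i\<in>UNIV - {j}. I q i - I (Suc q) i) = 0" using Io by (intro sum.neutral) auto
    finally show ?thesis using Ij by simp
  qed
  have sZ: "(\<Sum>i\<in>UNIV. Z q i) - (\<Sum>i\<in>UNIV. Z (Suc q) i) = Z q j - (\<Sum>i\<in>UNIV - {j}. W i)"
  proof -
    have "(\<Sum>i\<in>UNIV. Z q i) - (\<Sum>i\<in>UNIV. Z (Suc q) i) = (\<Sum>i\<in>UNIV. Z q i - Z (Suc q) i)"
      by (simp add: sum_subtractf)
    also have "\<dots> = (Z q j - Z (Suc q) j) + (\<Sum>i\<in>UNIV - {j}. Z q i - Z (Suc q) i)"
      by (simp add: sum.remove)
    also have "(\<Sum>i\<in>UNIV - {j}. Z q i - Z (Suc q) i) = (\<Sum>i\<in>UNIV - {j}. - W i)"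
      using Zo by (intro sum.cong) auto
    finally show ?thesis using Zj by (simp add: sum_negf)
  qed
  have "Phi \<phi> G Hs T J p \<gamma>bar \<xi> c1 c2 q (T q) - Phi \<phi> G Hs T J p \<gamma>bar \<xi> c1 c2 (Suc q) (T q)
     = \<phi> (p q) - \<phi> (p (Suc q)) - c1 * ((\<Sum>i\<in>UNIV. I q i) - (\<Sum>i\<in>UNIV. I (Suc q) i))
       + ((\<Sum>i\<in>UNIV. Z q i) - (\<Sum>i\<in>UNIV. Z (Suc q) i))"
    unfolding Phi_eq by (simp add: algebra_simps)
  also have "\<dots> = \<phi> (p q) - \<phi> (p (Suc q)) - c1 * I q j + (Z q j - (\<Sum>i\<in>UNIV - {j}. W i))"
    unfolding sI sZ ..
  finally show ?thesis unfolding Zjq unfolding I_def W_def j_def by simp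
qed


lemma W_bound:
  fixes Hs :: "real^'n::finite \<Rightarrow> real^'n^'n"
    and T :: "nat \<Rightarrow> real" and J :: "nat \<Rightarrow> 'n" and p :: "nat \<Rightarrow> real^'n"
    and \<xi> :: "nat \<Rightarrow> 'n \<Rightarrow> real"
  assumes sm: "strict_mono T" and T0: "0 < T 0" and dt1: "\<forall>k. dt T J k \<le> 1"
    and cont: "continuous_on UNIV Hs"
    and A4q: "(\<Sum>i\<in>UNIV - {J q}.
                Max ({1 / \<xi> m (J q) | m. m < q \<and> last_upd T J q (J q) < T m \<and> J m = i} \<union> {0})
                * Hbox Hs T p i (J q) (last_upd T J q (J q)) (T q) (p q $ J q)) \<le> \<epsilon>B * g"
    and \<xi>_pos: "\<forall>k i. i \<noteq> J k \<longrightarrow> 0 < \<xi> k i"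
    and Mj: "\<forall>m. m < q \<and> last_upd T J q (J q) < T m \<longrightarrow> J m \<noteq> J q"
    and dtq: "T q - last_upd T J q (J q) \<le> 1"
  shows "(\<Sum>m\<in>{m. m < q \<and> last_upd T J q (J q) < T m}.
            Hbox Hs T p (J m) (J q) (T m) (T q) (p q $ J q) * dt T J m / \<xi> m (J q)) \<le> 2 * (\<epsilon>B * g)"
proof -
  define j where "j = J q"
  define \<tau> where "\<tau> = last_upd T J q j"
  define M where "M = {m. m < q \<and> \<tau> < T m}"
  define f where "f m = Hbox Hs T p (J m) j (T m) (T q) (p q $ j) * dt T J m / \<xi> m j" for m
  define Mx where "Mx k = Max ({1 / \<xi> m j | m. m < q \<and> \<tau> < T m \<and> J m = k} \<union> {0})" for k
  define Hk where "Hk k = Hbox Hs T p k j \<tau> (T q) (p q $ j)" for k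
  have finM: "finite M" unfolding M_def by simp
  have MjM: "J m \<noteq> j" if "m \<in> M" for m using Mj that unfolding M_def j_def \<tau>_def by auto
  have "(\<Sum>m\<in>M. f m) = (\<Sum>k\<in>UNIV. \<Sum>m\<in>{m. m \<in> M \<and> J m = k}. f m)"
    by (rule sum.group[symmetric]) (use finM in auto)
  also have "\<dots> = (\<Sum>m\<in>{m. m \<in> M \<and> J m = j}. f m) + (\<Sum>k\<in>UNIV - {j}. \<Sum>m\<in>{m. m \<in> M \<and> J m = k}. f m)"
    by (simp add: sum.remove)
  also have "(\<Sum>m\<in>{m. m \<in> M \<and> J m = j}. f m) = 0"
    using MjM by (intro sum.neutral) auto
  also have "(\<Sum>k\<in>UNIV - {j}. \<Sum>m\<in>{m. m \<in> M \<and> J m = k}. f m) \<le> (\<Sum>k\<in>UNIV - {j}. 2 * (Mx k * Hk k))"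
  proof (rule sum_mono)
    fix k assume k: "k \<in> UNIV - {j}"
    define Mk where "Mk = {m. m \<in> M \<and> J m = k}"
    have finS: "finite {1 / \<xi> m j | m. m < q \<and> \<tau> < T m \<and> J m = k}"
      by (rule finite_subset[of _ "(\<lambda>m. 1 / \<xi> m j) ` {..<q}"]) auto
    have Mx0: "0 \<le> Mx k" unfolding Mx_def using finS by (intro Max_ge) auto
    have bigbox: "bdd_above ((\<lambda>x. \<bar>Hs x $ k $ j\<bar>) ` agd_box T p j \<tau> (T q) (p q $ j))"
      by (rule Hsup_bdd[OF cont box_bounded[OF sm]])
    have Hk0: "0 \<le> Hk k" unfolding Hk_def Hbox_def
      using Hsup_nonneg[OF bigbox box_nonempty] last_upd_lt[OF sm T0, of J q j] unfolding \<tau>_def by auto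
    have fm: "f m \<le> Mx k * Hk k * dt T J m" if m: "m \<in> Mk" for m
    proof -
      have mM: "m < q" "\<tau> < T m" "J m = k" using m unfolding Mk_def M_def by auto
      have Tle: "T m \<le> T q" using mM sm by (simp add: strict_mono_less_eq)
      have ne: "agd_box T p j (T m) (T q) (p q $ j) \<noteq> {}"
        using box_nonempty[OF Tle, where j=j and s="p q $ j" and T=T and p=p] by blast
      have sub: "agd_box T p j (T m) (T q) (p q $ j) \<subseteq> agd_box T p j \<tau> (T q) (p q $ j)"
        by (rule box_mono) (use mM in simp)
      have hm: "Hbox Hs T p (J m) j (T m) (T q) (p q $ j) \<le> Hk k"
        unfolding Hk_def Hbox_def mM(3)
        by (rule Hsup_mono[OF bigbox ne sub])
      have hm0: "0 \<le> Hbox Hs T p (J m) j (T m) (T q) (p q $ j)"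
        unfolding Hbox_def mM(3)
        using Hsup_nonneg[OF Hsup_bdd[OF cont box_bounded[OF sm]] box_nonempty[OF Tle, where j=j and s="p q $ j" and T=T and p=p]] by blast
      have xm: "1 / \<xi> m j \<le> Mx k" unfolding Mx_def using finS mM by (intro Max_ge) auto
      have dt0: "0 < dt T J m" by (rule dt_pos[OF sm T0])
      have xi0: "0 < \<xi> m j" using \<xi>_pos mM k by auto
      have "f m = Hbox Hs T p (J m) j (T m) (T q) (p q $ j) * dt T J m * (1 / \<xi> m j)"
        unfolding f_def by simp
      also have "\<dots> \<le> Hk k * dt T J m * Mx k"
        by (rule mult_mono[OF mult_right_mono[OF hm] xm]) (use dt0 Hk0 hm0 xi0 in auto)
      finally show ?thesis by (simp add: mult_ac)
    qed
    have sdt: "(\<Sum>m\<in>Mk. dt T J m) \<le> 2"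
    proof (cases "Mk = {}")
      case False
      have sub: "Mk \<subseteq> {..<q}" unfolding Mk_def M_def by auto
      have finMk: "finite Mk" using sub finite_subset by blast
      have "(\<Sum>m\<in>Mk. dt T J m) \<le> 1 + T (Max Mk) - T (Min Mk)"
        using dt_sum_group[OF sm T0 dt1, of q k] sub False unfolding Mk_def by blast
      moreover have "Max Mk \<in> Mk" "Min Mk \<in> Mk" using finMk False by auto
      then have "T (Max Mk) < T q" "\<tau> < T (Min Mk)" unfolding Mk_def M_def using sm
        by (auto simp: strict_mono_less)
      ultimately show ?thesis using dtq unfolding \<tau>_def j_def by linarith
    qed simp
    have "(\<Sum>m\<in>Mk. f m) \<le> (\<Sum>m\<in>Mk. Mx k * Hk k * dt T J m)" by (rule sum_mono[OF fm])
    also have "\<dots> = Mx k * Hk k * (\<Sum>m\<in>Mk. dt T J m)" by (simp add: sum_distrib_left)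
    also have "\<dots> \<le> Mx k * Hk k * 2" by (rule mult_left_mono[OF sdt]) (use Mx0 Hk0 in simp)
    finally show "(\<Sum>m\<in>{m. m \<in> M \<and> J m = k}. f m) \<le> 2 * (Mx k * Hk k)" unfolding Mk_def by simp
  qed
  also have "(\<Sum>k\<in>UNIV - {j}. 2 * (Mx k * Hk k)) = 2 * (\<Sum>k\<in>UNIV - {j}. Mx k * Hk k)"
    by (simp add: sum_distrib_left)
  also have "(\<Sum>k\<in>UNIV - {j}. Mx k * Hk k) \<le> \<epsilon>B * g"
    using A4q unfolding Mx_def Hk_def j_def \<tau>_def .
  finally show ?thesis unfolding M_def f_def j_def \<tau>_def by simp
qed


theorem mainTheorem4:
  fixes \<phi> :: "real^'n::finite \<Rightarrow> real" and G :: "real^'n \<Rightarrow> real^'n"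
    and Hs :: "real^'n \<Rightarrow> real^'n^'n"
    and T :: "nat \<Rightarrow> real" and J :: "nat \<Rightarrow> 'n" and p :: "nat \<Rightarrow> real^'n"
    and ptil :: "nat \<Rightarrow> real^'n" and \<gamma> :: "nat \<Rightarrow> real" and \<gamma>bar :: "'n \<Rightarrow> real"
    and \<xi> :: "nat \<Rightarrow> 'n \<Rightarrow> real"
    and \<alpha> \<epsilon>F \<epsilon>B c1 c2 :: real and q :: nat
  assumes grad: "\<forall>x. (\<phi> has_derivative (\<lambda>h. G x \<bullet> h)) (at x)"
    and hess: "\<forall>x. (G has_derivative (\<lambda>h. Hs x *v h)) (at x)"
    and hess_cont: "continuous_on UNIV Hs"
    and cvx: "convex_on UNIV \<phi>"
    and nonneg: "\<forall>x. 0 \<le> \<phi> x" and attained: "\<exists>x. \<phi> x = 0"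
    and T_mono: "strict_mono T" and T_pos: "0 < T 0"
    and T_unbdd: "filterlim T at_top sequentially"
    and all_updated: "\<forall>i s. \<exists>m. s < T m \<and> J m = i"
    and dt_le: "\<forall>k. dt T J k \<le> 1"
    and \<gamma>_pos: "\<forall>k. 0 < \<gamma> k"
    and ptil_box: "\<forall>k. ptil k \<in> agd_box T p (J k) (last_upd T J k (J k)) (T k) (p k $ J k)"
    and upd_j: "\<forall>k. p (Suc k) $ J k = p k $ J k - G (ptil k) $ J k / \<gamma> k * dt T J k"
    and upd_other: "\<forall>k i. i \<noteq> J k \<longrightarrow> p (Suc k) $ i = p k $ i"
    and \<alpha>_ge: "\<alpha> \<ge> 2" and \<epsilon>F_pos: "\<epsilon>F > 0" and \<epsilon>B_pos: "\<epsilon>B > 0"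
    and eps_sum: "1 / \<alpha> + 2 * \<epsilon>B + 2 * \<epsilon>F < 1"
    and \<xi>_pos: "\<forall>k i. i \<noteq> J k \<longrightarrow> 0 < \<xi> k i"
    and A1: "\<forall>k x. (\<forall>i. i \<noteq> J k \<longrightarrow> x $ i = p k $ i)
               \<and> x $ J k \<in> closed_segment (p k $ J k) (p (Suc k) $ J k)
             \<longrightarrow> \<phi> x - \<phi> (p k) - G (p k) $ J k * (x $ J k - p k $ J k)
                 \<le> \<gamma> k / \<alpha> * (x $ J k - p k $ J k)\<^sup>2"
    and A2: "\<forall>k. \<gamma> k \<le> \<gamma>bar (J k)"
    and A3: "\<forall>k. (\<Sum>i\<in>UNIV - {J k}. \<xi> k i
                * Hbox Hs T p (J k) i (T k) (next_upd T J i (T k)) (p k $ i)) \<le> \<epsilon>F * \<gamma> k"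
    and A4: "\<forall>k. (\<Sum>i\<in>UNIV - {J k}.
                Max ({1 / \<xi> m (J k) | m. m < k \<and> last_upd T J k (J k) < T m \<and> J m = i} \<union> {0})
                * Hbox Hs T p i (J k) (last_upd T J k (J k)) (T k) (p k $ J k)) \<le> \<epsilon>B * \<gamma> k"
    and c1_pos: "c1 > 0" and c2_pos: "c2 > 0"
  shows "Phi \<phi> G Hs T J p \<gamma>bar \<xi> c1 c2 q (T q) - Phi \<phi> G Hs T J p \<gamma>bar \<xi> c1 c2 (Suc q) (T q)
    \<ge> (1 - 1 / \<alpha> - 2 * \<epsilon>B - c1 * (1 + 4 * \<epsilon>B) - 2 * \<epsilon>F) * \<gamma> q * (dp p J q)\<^sup>2 / dt T J q
      + (1 - c2 - c1 * (2 + 8 * \<epsilon>B))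
        * (\<Sum>m\<in>{m. m < q \<and> last_upd T J q (J q) < T m}.
             \<xi> m (J q) * Hbox Hs T p (J m) (J q) (T m) (T q) (p q $ J q) * (dp p J m)\<^sup>2 / dt T J m)"
proof -
  have sm: "strict_mono T" by (rule T_mono)
  define j where "j = J q"
  define \<tau> where "\<tau> = last_upd T J q j"
  define t where "t = T q"
  define M where "M = {m. m < q \<and> \<tau> < T m}"
  have \<tau>t: "\<tau> < t" unfolding \<tau>_def t_def by (rule last_upd_lt[OF sm T_pos])
  have Dt: "dt T J q = t - \<tau>" unfolding dt_def t_def \<tau>_def j_def ..
  have Dt_pos: "0 < dt T J q" by (rule dt_pos[OF sm T_pos])
  have Dt1: "dt T J q \<le> 1" using dt_le by blast
  obtain lo where lo: "lo \<le> q" and Meq: "M = {lo..<q}"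
    and notj: "\<forall>m. lo \<le> m \<longrightarrow> m < q \<longrightarrow> J m \<noteq> j"
    and img: "\<forall>i. i \<noteq> j \<longrightarrow> (\<lambda>t'. pt T p t' $ i) ` {\<tau>..T q} \<subseteq> (\<lambda>r. p r $ i) ` {lo..q}"
    and ptr: "\<forall>t'. \<tau> < t' \<and> t' \<le> t \<longrightarrow> (\<exists>r. lo \<le> r \<and> r \<le> q \<and> pt T p t' = p r)"
  proof (cases "\<exists>m<q. J m = j")
    case True
    then obtain r0 where r0: "r0 < q" "J r0 = j" "\<tau> = T r0" "\<And>m. r0 < m \<Longrightarrow> m < q \<Longrightarrow> J m \<noteq> j"
      using last_upd_ex[of q J j T] unfolding \<tau>_def by blast
    have ptr': "\<exists>r. Suc r0 \<le> r \<and> r \<le> q \<and> pt T p t' = p r" if "\<tau> < t'" "t' \<le> t" for t'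
      using card_ge[OF sm, of r0 t' q] card_le_n[OF sm, of t' q] that r0(3) unfolding pt_def t_def by auto
    show ?thesis
    proof (rule that[of "Suc r0"])
      show "Suc r0 \<le> q" using r0 by simp
      show "M = {Suc r0..<q}" unfolding M_def r0(3) using sm by (auto simp: strict_mono_less)
      show "\<forall>m. Suc r0 \<le> m \<longrightarrow> m < q \<longrightarrow> J m \<noteq> j" using r0(4) by auto
      show "\<forall>t'. \<tau> < t' \<and> t' \<le> t \<longrightarrow> (\<exists>r. Suc r0 \<le> r \<and> r \<le> q \<and> pt T p t' = p r)" using ptr' by blast
      show "\<forall>i. i \<noteq> j \<longrightarrow> (\<lambda>t'. pt T p t' $ i) ` {\<tau>..T q} \<subseteq> (\<lambda>r. p r $ i) ` {Suc r0..q}"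
      proof (intro allI impI subsetI)
        fix i v assume ij: "i \<noteq> j" and v: "v \<in> (\<lambda>t'. pt T p t' $ i) ` {\<tau>..T q}"
        then obtain t' where t': "t' \<in> {\<tau>..T q}" "v = pt T p t' $ i" by blast
        show "v \<in> (\<lambda>r. p r $ i) ` {Suc r0..q}"
        proof (cases "t' = \<tau>")
          case True
          have "v = p r0 $ i" using t' True r0(3) by (simp add: pt_T[OF sm])
          also have "\<dots> = p (Suc r0) $ i" using upd_other ij r0(2) by auto
          finally show ?thesis using r0(1) by auto
        next
          case False
          then obtain r where "Suc r0 \<le> r" "r \<le> q" "pt T p t' = p r" using ptr' t' unfolding t_def by force
          then show ?thesis using t' by auto
        qed
      qed
    qed
  next
    case False
    have \<tau>0: "\<tau> = 0" unfolding \<tau>_def using last_upd_none[OF False] .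
    have Tpos: "0 < T m" for m using T_pos sm by (metis le0 order_less_le_trans strict_mono_less_eq)
    have ptr': "\<exists>r. 0 \<le> r \<and> r \<le> q \<and> pt T p t' = p r" if "t' \<le> t" for t'
      using card_le_n[OF sm, of t' q] that unfolding pt_def t_def by auto
    show ?thesis
    proof (rule that[of 0])
      show "0 \<le> q" by simp
      show "M = {0..<q}" unfolding M_def \<tau>0 using Tpos by auto
      show "\<forall>m. 0 \<le> m \<longrightarrow> m < q \<longrightarrow> J m \<noteq> j" using False by auto
      show "\<forall>t'. \<tau> < t' \<and> t' \<le> t \<longrightarrow> (\<exists>r. 0 \<le> r \<and> r \<le> q \<and> pt T p t' = p r)" using ptr' by blast
      show "\<forall>i. i \<noteq> j \<longrightarrow> (\<lambda>t'. pt T p t' $ i) ` {\<tau>..T q} \<subseteq> (\<lambda>r. p r $ i) ` {0..q}"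
        using ptr' unfolding t_def by fastforce
    qed
  qed
  have pj: "p r $ j = p q $ j" if "lo \<le> r" "r \<le> q" for r
  proof -
    have "p q $ j = p r $ j" by (rule p_const[OF upd_other]) (use notj that in auto)
    then show ?thesis by simp
  qed
  have MJ: "J m \<noteq> j" if "m \<in> M" for m using that notj unfolding Meq by auto
  define h where "h m = Hbox Hs T p (J m) j (T m) t (p q $ j)" for m
  define S where "S = (\<Sum>m\<in>M. h m * \<bar>dp p J m\<bar>)"
  define Q where "Q = (\<Sum>m\<in>M. \<xi> m j * h m * (dp p J m)\<^sup>2 / dt T J m)"
  define Wt where "Wt = (\<Sum>m\<in>M. h m * dt T J m / \<xi> m j)"
  define g where "g = G (p q) $ j"
  define gt where "gt = G (ptil q) $ j"
  define \<Delta>p where "\<Delta>p = dp p J q"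
  define \<Delta>t where "\<Delta>t = dt T J q"
  define \<gamma>q where "\<gamma>q = \<gamma> q"
  define X where "X = \<gamma>q * \<Delta>p\<^sup>2 / \<Delta>t"
  have \<gamma>q_pos: "0 < \<gamma>q" unfolding \<gamma>q_def using \<gamma>_pos by blast
  have \<Delta>t_pos: "0 < \<Delta>t" and \<Delta>t1: "\<Delta>t \<le> 1" unfolding \<Delta>t_def using Dt_pos Dt1 by auto
  have X0: "0 \<le> X" unfolding X_def using \<gamma>q_pos \<Delta>t_pos by simp
  have finM: "finite M" unfolding Meq by simp
  have hnn: "0 \<le> h m" if "m \<in> M" for m
  proof -
    have "T m \<le> T q" using that sm unfolding M_def by (simp add: strict_mono_less_eq)
    then show ?thesis unfolding h_def Hbox_def t_def
      using Hsup_nonneg[OF Hsup_bdd[OF hess_cont box_bounded[OF sm]] box_nonempty[OF \<open>T m \<le> T q\<close>, where j=j and s="p q $ j" and T=T and p=p]] by blast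
  qed
  have \<xi>m: "0 < \<xi> m j" if "m \<in> M" for m using \<xi>_pos MJ[OF that] by auto
  have dtm: "0 < dt T J m" for m by (rule dt_pos[OF sm T_pos])
  have S0: "0 \<le> S" unfolding S_def using hnn by (intro sum_nonneg) auto
  have nnt: "0 \<le> \<xi> m j * h m * (dp p J m)\<^sup>2 / dt T J m" if m: "m \<in> M" for m
    using \<xi>m[OF m] hnn[OF m] dtm[of m] by (intro divide_nonneg_pos mult_nonneg_nonneg) auto
  have Q0: "0 \<le> Q" unfolding Q_def using nnt by (intro sum_nonneg) auto
  have GB: "\<bar>G x $ j - g\<bar> \<le> S" if "x \<in> agd_box T p j \<tau> (T q) (p q $ j)" for x
  proof -
    have "\<bar>G x $ j - G (p q) $ j\<bar> \<le> (\<Sum>r\<in>{lo..<q}. Hsup Hs (J r) j (agd_box T p j (T r) (T q) (p q $ j)) * \<bar>dp p J r\<bar>)"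
      by (rule grad_box_bound[OF grad hess hess_cont sm upd_other lo notj img that])
    then show ?thesis unfolding S_def Meq h_def Hbox_def g_def t_def .
  qed
  have ggt: "\<bar>gt - g\<bar> \<le> S" unfolding gt_def using GB ptil_box unfolding j_def \<tau>_def by blast
  have Gpt: "\<bar>G (pt T p t') $ j\<bar> \<le> \<bar>gt\<bar> + 2 * S" if tt: "\<tau> < t'" "t' \<le> t" for t'
  proof -
    obtain r where r: "lo \<le> r" "r \<le> q" "pt T p t' = p r" using ptr tt by blast
    have "pt T p t' \<in> agd_box T p j \<tau> (T q) (p q $ j)"
      unfolding agd_box_def using pj[OF r(1,2)] r(3) pt_in_hull[of t' \<tau> "T q" T p] tt unfolding t_def by auto
    then have "\<bar>G (pt T p t') $ j - g\<bar> \<le> S" by (rule GB)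
    then show ?thesis using ggt by linarith
  qed
  have upd: "\<Delta>p = - gt / \<gamma>q * \<Delta>t"
    using upd_j unfolding \<Delta>p_def dp_def gt_def \<gamma>q_def \<Delta>t_def j_def by (simp add: algebra_simps)
  have gtdp: "gt * \<Delta>p = - X" unfolding X_def upd using \<gamma>q_pos \<Delta>t_pos
    by (simp add: field_simps power2_eq_square)
  have agt: "\<bar>gt\<bar> = \<gamma>q * \<bar>\<Delta>p\<bar> / \<Delta>t" unfolding upd using \<gamma>q_pos \<Delta>t_pos
    by (simp add: abs_mult abs_divide field_simps)
  have Wb: "Wt \<le> 2 * (\<epsilon>B * \<gamma>q)"
  proof -
    have A4q: "(\<Sum>i\<in>UNIV - {J q}.
                Max ({1 / \<xi> m (J q) | m. m < q \<and> last_upd T J q (J q) < T m \<and> J m = i} \<union> {0})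
                * Hbox Hs T p i (J q) (last_upd T J q (J q)) (T q) (p q $ J q)) \<le> \<epsilon>B * \<gamma>q"
      using A4 unfolding \<gamma>q_def by blast
    have Mj': "\<forall>m. m < q \<and> last_upd T J q (J q) < T m \<longrightarrow> J m \<noteq> J q"
      using MJ unfolding M_def \<tau>_def j_def by blast
    have dtq: "T q - last_upd T J q (J q) \<le> 1" using Dt Dt1 unfolding t_def \<tau>_def j_def by simp
    show ?thesis using W_bound[OF sm T_pos dt_le hess_cont A4q \<xi>_pos Mj' dtq]
      unfolding Wt_def M_def h_def \<tau>_def j_def t_def .
  qed
  have CS: "S\<^sup>2 \<le> Wt * Q" unfolding S_def Wt_def Q_def
    by (rule cs_sum) (use hnn dtm \<xi>m in auto)
  have AM: "S * \<bar>\<Delta>p\<bar> \<le> Q + Wt * \<Delta>p\<^sup>2 / 4"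
  proof -
    have "S * \<bar>\<Delta>p\<bar> = (\<Sum>m\<in>M. h m * (\<bar>dp p J m\<bar> * \<bar>\<Delta>p\<bar>))" unfolding S_def
      by (simp add: sum_distrib_right mult.assoc)
    also have "\<dots> \<le> (\<Sum>m\<in>M. \<xi> m j * h m * (dp p J m)\<^sup>2 / dt T J m + h m * dt T J m / \<xi> m j * \<Delta>p\<^sup>2 / 4)"
    proof (rule sum_mono)
      fix m assume m: "m \<in> M"
      define c where "c = \<xi> m j / dt T J m"
      have c: "0 < c" unfolding c_def using \<xi>m[OF m] dtm[of m] by simp
      have "\<bar>dp p J m\<bar> * \<bar>\<Delta>p\<bar> \<le> c * \<bar>dp p J m\<bar>\<^sup>2 + \<bar>\<Delta>p\<bar>\<^sup>2 / (4 * c)" by (rule amgm[OF c])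
      then have "h m * (\<bar>dp p J m\<bar> * \<bar>\<Delta>p\<bar>) \<le> h m * (c * \<bar>dp p J m\<bar>\<^sup>2 + \<bar>\<Delta>p\<bar>\<^sup>2 / (4 * c))"
        by (rule mult_left_mono[OF _ hnn[OF m]])
      also have "\<dots> = \<xi> m j * h m * (dp p J m)\<^sup>2 / dt T J m + h m * dt T J m / \<xi> m j * \<Delta>p\<^sup>2 / 4"
        unfolding c_def using \<xi>m[OF m] dtm[of m] by (simp add: field_simps)
      finally show "h m * (\<bar>dp p J m\<bar> * \<bar>\<Delta>p\<bar>) \<le> \<xi> m j * h m * (dp p J m)\<^sup>2 / dt T J m + h m * dt T J m / \<xi> m j * \<Delta>p\<^sup>2 / 4" .
    qed
    also have "\<dots> = Q + Wt * \<Delta>p\<^sup>2 / 4" unfolding Q_def Wt_def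
      by (simp add: sum.distrib sum_divide_distrib sum_distrib_right)
    finally show ?thesis .
  qed
  have E1: "\<phi> (p q) - \<phi> (p (Suc q)) \<ge> X * (1 - 1 / \<alpha> - 2 * \<epsilon>B) - Q"
  proof -
    have a1: "\<phi> (p (Suc q)) - \<phi> (p q) - g * \<Delta>p \<le> \<gamma>q / \<alpha> * \<Delta>p\<^sup>2"
      using A1[rule_format, of q "p (Suc q)"] upd_other unfolding g_def \<Delta>p_def dp_def \<gamma>q_def j_def
      by auto
    have "- g * \<Delta>p = - gt * \<Delta>p + (gt - g) * \<Delta>p" by (simp add: algebra_simps)
    also have "\<dots> \<ge> X - S * \<bar>\<Delta>p\<bar>"
    proof -
      have "\<bar>(gt - g) * \<Delta>p\<bar> \<le> S * \<bar>\<Delta>p\<bar>" unfolding abs_mult by (rule mult_right_mono[OF ggt]) simp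
      then show ?thesis using gtdp by linarith
    qed
    finally have b: "- g * \<Delta>p \<ge> X - S * \<bar>\<Delta>p\<bar>" .
    have c: "\<gamma>q / \<alpha> * \<Delta>p\<^sup>2 \<le> X / \<alpha>"
    proof -
      have "\<Delta>p\<^sup>2 \<le> \<Delta>p\<^sup>2 / \<Delta>t" using \<Delta>t_pos \<Delta>t1 by (simp add: le_divide_eq mult_left_le)
      then have "\<gamma>q / \<alpha> * \<Delta>p\<^sup>2 \<le> \<gamma>q / \<alpha> * (\<Delta>p\<^sup>2 / \<Delta>t)"
        by (rule mult_left_mono) (use \<gamma>q_pos \<alpha>_ge in simp)
      then show ?thesis unfolding X_def by (simp add: mult.commute)
    qed
    have d: "S * \<bar>\<Delta>p\<bar> \<le> Q + 2 * \<epsilon>B * X"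
    proof -
      have "Wt * \<Delta>p\<^sup>2 \<le> 2 * (\<epsilon>B * \<gamma>q) * \<Delta>p\<^sup>2" by (rule mult_right_mono[OF Wb]) simp
      then have "Wt * \<Delta>p\<^sup>2 / 4 \<le> 2 * (\<epsilon>B * \<gamma>q) * \<Delta>p\<^sup>2 / 4" by (rule divide_right_mono) simp
      also have "\<dots> \<le> 2 * \<epsilon>B * X"
      proof -
        have "\<Delta>p\<^sup>2 \<le> \<Delta>p\<^sup>2 / \<Delta>t" using \<Delta>t_pos \<Delta>t1 by (simp add: le_divide_eq mult_left_le)
        then have "\<epsilon>B * \<gamma>q * \<Delta>p\<^sup>2 \<le> \<epsilon>B * \<gamma>q * (\<Delta>p\<^sup>2 / \<Delta>t)"
          by (rule mult_left_mono) (use \<gamma>q_pos \<epsilon>B_pos in simp)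
        moreover have "0 \<le> \<epsilon>B * \<gamma>q * \<Delta>p\<^sup>2" using \<gamma>q_pos \<epsilon>B_pos by simp
        ultimately show ?thesis unfolding X_def by simp
      qed
      finally show ?thesis using AM by linarith
    qed
    have "X / \<alpha> = X * (1 / \<alpha>)" by simp
    then show ?thesis using a1 b c d by (simp add: algebra_simps)
  qed
  define K where "K = (\<bar>gt\<bar> + 2 * S)\<^sup>2 / \<gamma>bar j"
  have \<gamma>bar: "\<gamma>q \<le> \<gamma>bar j" using A2 unfolding \<gamma>q_def j_def by blast
  have \<gamma>bar_pos: "0 < \<gamma>bar j" using \<gamma>bar \<gamma>q_pos by linarith
  have K0: "0 \<le> K" unfolding K_def using \<gamma>bar_pos by simp
  have Ibd: "integral {\<tau>..t} (\<lambda>t'. (G (pt T p t') $ j)\<^sup>2 / \<gamma>bar j) \<le> (t - \<tau>) * K"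
  proof (rule integral_bound)
    show "\<tau> \<le> t" using \<tau>t by simp
    show "0 \<le> K" by (rule K0)
    fix x assume x: "\<tau> < x" "x \<le> t"
    have "(G (pt T p x) $ j)\<^sup>2 \<le> (\<bar>gt\<bar> + 2 * S)\<^sup>2"
      using Gpt[OF x] by (metis abs_ge_zero power2_abs power_mono)
    then show "(G (pt T p x) $ j)\<^sup>2 / \<gamma>bar j \<le> K" unfolding K_def
      by (rule divide_right_mono) (use \<gamma>bar_pos in simp)
  qed
  have I2: "(t - \<tau>) * K \<le> (1 + 4 * \<epsilon>B) * X + (2 + 8 * \<epsilon>B) * Q"
  proof -
    define a where "a = \<bar>gt\<bar>"
    define E where "E = \<Delta>t / \<gamma>q"
    have E0: "0 < E" unfolding E_def using \<Delta>t_pos \<gamma>q_pos by simp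
    have tK: "(t - \<tau>) * K \<le> E * (a + 2 * S)\<^sup>2"
    proof -
      have "(a + 2 * S)\<^sup>2 / \<gamma>bar j \<le> (a + 2 * S)\<^sup>2 / \<gamma>q"
        by (rule divide_left_mono) (use \<gamma>bar \<gamma>q_pos in auto)
      then have "\<Delta>t * ((a + 2 * S)\<^sup>2 / \<gamma>bar j) \<le> \<Delta>t * ((a + 2 * S)\<^sup>2 / \<gamma>q)"
        by (rule mult_left_mono) (use \<Delta>t_pos in simp)
      then show ?thesis unfolding K_def E_def a_def \<Delta>t_def Dt by simp
    qed
    have Ea: "E * a\<^sup>2 = X" unfolding E_def a_def agt X_def using \<Delta>t_pos \<gamma>q_pos
      by (simp add: field_simps power2_eq_square)
    have aS: "a * S \<le> \<epsilon>B * a\<^sup>2 + S\<^sup>2 / (4 * \<epsilon>B)" by (rule amgm[OF \<epsilon>B_pos])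
    have ES2: "E * S\<^sup>2 \<le> 2 * \<epsilon>B * \<Delta>t * Q"
    proof -
      have "E * S\<^sup>2 \<le> E * (Wt * Q)" by (rule mult_left_mono[OF CS]) (use E0 in simp)
      also have "\<dots> \<le> E * (2 * (\<epsilon>B * \<gamma>q) * Q)"
        by (rule mult_left_mono[OF mult_right_mono[OF Wb Q0]]) (use E0 in simp)
      also have "\<dots> = 2 * \<epsilon>B * \<Delta>t * Q" unfolding E_def using \<gamma>q_pos by simp
      finally show ?thesis .
    qed
    have "E * (a + 2 * S)\<^sup>2 = E * a\<^sup>2 + 4 * (E * (a * S)) + 4 * (E * S\<^sup>2)"
      by (simp add: power2_eq_square algebra_simps)
    also have "\<dots> \<le> X + 4 * (E * (\<epsilon>B * a\<^sup>2 + S\<^sup>2 / (4 * \<epsilon>B))) + 4 * (2 * \<epsilon>B * \<Delta>t * Q)"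
    proof -
      have m1: "E * (a * S) \<le> E * (\<epsilon>B * a\<^sup>2 + S\<^sup>2 / (4 * \<epsilon>B))"
        by (rule mult_left_mono[OF aS]) (use E0 in simp)
      show ?thesis using m1 Ea ES2 by linarith
    qed
    also have "4 * (E * (\<epsilon>B * a\<^sup>2 + S\<^sup>2 / (4 * \<epsilon>B))) = 4 * \<epsilon>B * X + (E * S\<^sup>2) / \<epsilon>B"
      using Ea \<epsilon>B_pos by (simp add: field_simps)
    also have "(E * S\<^sup>2) / \<epsilon>B \<le> 2 * \<Delta>t * Q"
      using ES2 \<epsilon>B_pos by (simp add: divide_le_eq mult_ac)
    finally have "E * (a + 2 * S)\<^sup>2 \<le> X + 4 * \<epsilon>B * X + 2 * \<Delta>t * Q + 8 * \<epsilon>B * \<Delta>t * Q" by simp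
    moreover have dQ: "\<Delta>t * Q \<le> Q" using mult_right_mono[OF \<Delta>t1 Q0] by simp
    moreover have "\<epsilon>B * (\<Delta>t * Q) \<le> \<epsilon>B * Q" by (rule mult_left_mono[OF dQ]) (use \<epsilon>B_pos in simp)
    ultimately show ?thesis using tK by (simp add: algebra_simps)
  qed
  have Zb: "(\<Sum>m\<in>M. \<xi> m j * h m * (dp p J m)\<^sup>2 / dt T J m * (2 - c2 * (t - T m))) \<ge> (2 - c2) * Q"
  proof -
    have "(2 - c2) * Q = (\<Sum>m\<in>M. \<xi> m j * h m * (dp p J m)\<^sup>2 / dt T J m * (2 - c2))"
      unfolding Q_def by (simp add: sum_distrib_left mult_ac)
    also have "\<dots> \<le> (\<Sum>m\<in>M. \<xi> m j * h m * (dp p J m)\<^sup>2 / dt T J m * (2 - c2 * (t - T m)))"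
    proof (rule sum_mono)
      fix m assume m: "m \<in> M"
      have "t - T m \<le> 1" using m Dt Dt1 unfolding M_def by simp
      then have "2 - c2 \<le> 2 - c2 * (t - T m)" using c2_pos by (simp add: mult_left_le)
      moreover have "0 \<le> \<xi> m j * h m * (dp p J m)\<^sup>2 / dt T J m"
        by (rule nnt[OF m])
      ultimately show "\<xi> m j * h m * (dp p J m)\<^sup>2 / dt T J m * (2 - c2) \<le> \<xi> m j * h m * (dp p J m)\<^sup>2 / dt T J m * (2 - c2 * (t - T m))"
        by (rule mult_left_mono)
    qed
    finally show ?thesis .
  qed
  have Nb: "(\<Sum>i\<in>UNIV - {j}. \<xi> q i * Hbox Hs T p j i (T q) (next_upd T J i (T q)) (p q $ i)
        * \<Delta>p\<^sup>2 / \<Delta>t * (2 - c2 * (T q - T q))) \<le> 2 * \<epsilon>F * X"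
  proof -
    have "(\<Sum>i\<in>UNIV - {j}. \<xi> q i * Hbox Hs T p j i (T q) (next_upd T J i (T q)) (p q $ i)
        * \<Delta>p\<^sup>2 / \<Delta>t * (2 - c2 * (T q - T q)))
       = 2 * (\<Delta>p\<^sup>2 / \<Delta>t) * (\<Sum>i\<in>UNIV - {j}. \<xi> q i * Hbox Hs T p j i (T q) (next_upd T J i (T q)) (p q $ i))"
      by (simp add: sum_distrib_left mult_ac)
    also have "\<dots> \<le> 2 * (\<Delta>p\<^sup>2 / \<Delta>t) * (\<epsilon>F * \<gamma>q)"
      by (rule mult_left_mono) (use A3 \<Delta>t_pos in \<open>auto simp: j_def \<gamma>q_def\<close>)
    also have "\<dots> = 2 * \<epsilon>F * X" unfolding X_def by simp
    finally show ?thesis .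
  qed
  have PD: "Phi \<phi> G Hs T J p \<gamma>bar \<xi> c1 c2 q (T q) - Phi \<phi> G Hs T J p \<gamma>bar \<xi> c1 c2 (Suc q) (T q)
     = \<phi> (p q) - \<phi> (p (Suc q)) - c1 * integral {\<tau>..t} (\<lambda>t'. (G (pt T p t') $ j)\<^sup>2 / \<gamma>bar j)
       + (\<Sum>m\<in>M. \<xi> m j * h m * (dp p J m)\<^sup>2 / dt T J m * (2 - c2 * (t - T m)))
       - (\<Sum>i\<in>UNIV - {j}. \<xi> q i * Hbox Hs T p j i (T q) (next_upd T J i (T q)) (p q $ i)
        * \<Delta>p\<^sup>2 / \<Delta>t * (2 - c2 * (T q - T q)))"
    using Phi_diff[OF sm T_pos upd_other, of \<phi> G Hs \<gamma>bar \<xi> c1 c2 q]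
    unfolding j_def \<tau>_def t_def M_def h_def \<Delta>p_def \<Delta>t_def by simp
  have cI: "c1 * integral {\<tau>..t} (\<lambda>t'. (G (pt T p t') $ j)\<^sup>2 / \<gamma>bar j) \<le> c1 * ((1 + 4 * \<epsilon>B) * X + (2 + 8 * \<epsilon>B) * Q)"
    by (rule mult_left_mono[OF order_trans[OF Ibd I2]]) (use c1_pos in simp)
  have RHS: "(1 - 1 / \<alpha> - 2 * \<epsilon>B - c1 * (1 + 4 * \<epsilon>B) - 2 * \<epsilon>F) * \<gamma> q * (dp p J q)\<^sup>2 / dt T J q
      + (1 - c2 - c1 * (2 + 8 * \<epsilon>B))
        * (\<Sum>m\<in>{m. m < q \<and> last_upd T J q (J q) < T m}.
             \<xi> m (J q) * Hbox Hs T p (J m) (J q) (T m) (T q) (p q $ J q) * (dp p J m)\<^sup>2 / dt T J m)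
     = (1 - 1 / \<alpha> - 2 * \<epsilon>B - c1 * (1 + 4 * \<epsilon>B) - 2 * \<epsilon>F) * X + (1 - c2 - c1 * (2 + 8 * \<epsilon>B)) * Q"
    unfolding X_def Q_def M_def h_def j_def \<tau>_def t_def \<gamma>q_def \<Delta>p_def \<Delta>t_def by simp
  show ?thesis unfolding RHS PD using E1 cI Zb Nb by (simp add: algebra_simps)
qed

end
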